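(* Let $\Omega\subset\mathbb{R}^n$ be bounded and open, and let $\mathcal{A}_0$ be the class of (equivalence classes of) nets of semilinear operators described in the context. Let $A\in\mathcal{A}_0$ with representative $(A_\epsilon)$, and let $u\in\mathcal{G}(\overline{\Omega})$ be such that for every representative $(u_\epsilon)$ of $u$ there exist $\epsilon_0\in(0,1]$, $C>0$ and $m\in\mathbb{N}$ with $\inf_{x\in\overline{\Omega}}|u_\epsilon(x)|\ge C\epsilon^m$ for all $\epsilon\in(0,\epsilon_0)$. Then $(A_\epsilon u_\epsilon)\in\mathcal{E}_M(\overline{\Omega})$ and its class $[(A_\epsilon u_\epsilon)]\in\mathcal{G}(\overline{\Omega})$ does not depend on the choice of representative $(A_\epsilon)$ of $A$ nor on the choice of representative $(u_\epsilon)$ of $u$. Hence $Au:=[(A_\epsilon u_\epsilon)]$ is a well-defined differential operator from (such elements of) $\mathcal{G}(\overline{\Omega})$ to $\mathcal{G}(\overline{\Omega})$.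
   Context: $\mathcal{E}_M(\overline{\Omega})$: nets $(u_\epsilon)_{\epsilon\in(0,1]}\subset C^\infty(\overline{\Omega})$ such that for every $k\in\mathbb{N}$ there is $a\in\mathbb{R}$ with $\sup_{|\beta|\le k,x\in\overline{\Omega}}|D^\beta u_\epsilon(x)|=O(\epsilon^a)$ as $\epsilon\to0$; $\mathcal{N}(\overline{\Omega})$: nets in $\mathcal{E}_M(\overline{\Omega})$ for which this holds for every $a\in\mathbb{R}$; $\mathcal{G}(\overline{\Omega})=\mathcal{E}_M(\overline{\Omega})/\mathcal{N}(\overline{\Omega})$ with componentwise sums, products and derivatives. Fix integers $n_1,\dots,n_K\in\mathbb{Z}$. $\mathcal{A}$ is the family of nets of operators $A_\epsilon u=-\sum_{i,j=1}^N D_i(a^{ij}_\epsilon D_ju)+\sum_{i=1}^K b^i_\epsilon u^{n_i}$ with $(a^{ij}_\epsilon),(b^i_\epsilon)\in\mathcal{E}_M(\overline{\Omega})$. Two such nets $(A_\epsilon),(\overline{A}_\epsilon)$ (with coefficients $a^{ij}_\epsilon,b^i_\epsilon$ and $\overline{a}^{ij}_\epsilon,\overline{b}^i_\epsilon$) are equivalent if $(a^{ij}_\epsilon-\overline{a}^{ij}_\epsilon)$ and $(b^i_\epsilon-\overline{b}^i_\epsilon)$ belong to $\mathcal{N}(\overline{\Omega})$ for all $i,j$; $\mathcal{A}_0$ is the set of equivalence classes. *)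

theory Defs
  imports "HOL-Analysis.Analysis"
begin

text \<open>Partial derivative in direction i and iterated partial derivatives D^beta,
  where a multi-index is represented by the list of directions (|beta| = length).\<close>

definition partial :: "'n::finite \<Rightarrow> (real^'n \<Rightarrow> real) \<Rightarrow> real^'n \<Rightarrow> real" where
  "partial i f x = deriv (\<lambda>t. f (x + t *\<^sub>R axis i 1)) 0"

fun Dmulti :: "'n::finite list \<Rightarrow> (real^'n \<Rightarrow> real) \<Rightarrow> real^'n \<Rightarrow> real" where
  "Dmulti [] f = f"
| "Dmulti (i # is) f = partial i (Dmulti is f)"

text \<open>C^infinity(closure Omega) for bounded open Omega: smooth on Omega with every derivative
  uniformly continuous on Omega (equivalently, extending continuously to the closure).
  Values outside Omega are irrelevant.\<close>

definition smooth_closure :: "(real^'n::finite) set \<Rightarrow> (real^'n \<Rightarrow> real) \<Rightarrow> bool" where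
  "smooth_closure \<Omega> f \<longleftrightarrow>
     (\<forall>\<beta>. \<forall>x\<in>\<Omega>. Dmulti \<beta> f differentiable (at x)) \<and>
     (\<forall>\<beta>. uniformly_continuous_on \<Omega> (Dmulti \<beta> f))"

text \<open>Nets (u_eps), eps in (0,1], are functions real => real^'n => real.\<close>

definition moderate :: "(real^'n::finite) set \<Rightarrow> (real \<Rightarrow> real^'n \<Rightarrow> real) \<Rightarrow> bool" where
  "moderate \<Omega> u \<longleftrightarrow>
     (\<exists>\<epsilon>0>0. \<forall>\<epsilon>\<in>{0<..<\<epsilon>0}. smooth_closure \<Omega> (u \<epsilon>)) \<and>
     (\<forall>k::nat. \<exists>a::real. \<exists>C \<epsilon>0. \<epsilon>0 > 0 \<and>
        (\<forall>\<epsilon>\<in>{0<..<\<epsilon>0}. \<forall>\<beta> x. length \<beta> \<le> k \<and> x \<in> \<Omega> \<longrightarrow>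
            \<bar>Dmulti \<beta> (u \<epsilon>) x\<bar> \<le> C * \<epsilon> powr a))"

definition negligible :: "(real^'n::finite) set \<Rightarrow> (real \<Rightarrow> real^'n \<Rightarrow> real) \<Rightarrow> bool" where
  "negligible \<Omega> u \<longleftrightarrow> moderate \<Omega> u \<and>
     (\<forall>k::nat. \<forall>a::real. \<exists>C \<epsilon>0. \<epsilon>0 > 0 \<and>
        (\<forall>\<epsilon>\<in>{0<..<\<epsilon>0}. \<forall>\<beta> x. length \<beta> \<le> k \<and> x \<in> \<Omega> \<longrightarrow>
            \<bar>Dmulti \<beta> (u \<epsilon>) x\<bar> \<le> C * \<epsilon> powr a))"

definition gequiv :: "(real^'n::finite) set \<Rightarrow> (real \<Rightarrow> real^'n \<Rightarrow> real) \<Rightarrow> (real \<Rightarrow> real^'n \<Rightarrow> real) \<Rightarrow> bool" where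
  "gequiv \<Omega> u v \<longleftrightarrow> negligible \<Omega> (\<lambda>\<epsilon> x. u \<epsilon> x - v \<epsilon> x)"

definition semilin_op ::
  "nat \<Rightarrow> (nat \<Rightarrow> int) \<Rightarrow> ('n::finite \<Rightarrow> 'n \<Rightarrow> real \<Rightarrow> real^'n \<Rightarrow> real) \<Rightarrow>
   (nat \<Rightarrow> real \<Rightarrow> real^'n \<Rightarrow> real) \<Rightarrow> real \<Rightarrow> (real^'n \<Rightarrow> real) \<Rightarrow> real^'n \<Rightarrow> real" where
  "semilin_op K ns a b \<epsilon> u x =
     - (\<Sum>i\<in>UNIV. \<Sum>j\<in>UNIV. partial i (\<lambda>y. a i j \<epsilon> y * partial j u y) x)
     + (\<Sum>l\<in>{1..K}. b l \<epsilon> x * power_int (u x) (ns l))"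

definition admissible_coeffs ::
  "(real^'n::finite) set \<Rightarrow> nat \<Rightarrow> ('n \<Rightarrow> 'n \<Rightarrow> real \<Rightarrow> real^'n \<Rightarrow> real) \<Rightarrow>
   (nat \<Rightarrow> real \<Rightarrow> real^'n \<Rightarrow> real) \<Rightarrow> bool" where
  "admissible_coeffs \<Omega> K a b \<longleftrightarrow>
     (\<forall>i j. moderate \<Omega> (a i j)) \<and> (\<forall>l\<in>{1..K}. moderate \<Omega> (b l))"

definition op_equiv ::
  "(real^'n::finite) set \<Rightarrow> nat \<Rightarrow> ('n \<Rightarrow> 'n \<Rightarrow> real \<Rightarrow> real^'n \<Rightarrow> real) \<Rightarrow>
   (nat \<Rightarrow> real \<Rightarrow> real^'n \<Rightarrow> real) \<Rightarrow> ('n \<Rightarrow> 'n \<Rightarrow> real \<Rightarrow> real^'n \<Rightarrow> real) \<Rightarrow>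
   (nat \<Rightarrow> real \<Rightarrow> real^'n \<Rightarrow> real) \<Rightarrow> bool" where
  "op_equiv \<Omega> K a b a' b' \<longleftrightarrow>
     (\<forall>i j. gequiv \<Omega> (a i j) (a' i j)) \<and> (\<forall>l\<in>{1..K}. gequiv \<Omega> (b l) (b' l))"

end

theory Submission
  imports Defs
begin


lemma line_deriv:
  fixes f :: "real^'n::finite \<Rightarrow> real"
  assumes "f differentiable (at x)"
  shows "((\<lambda>t. f (x + t *\<^sub>R axis i 1)) has_real_derivative partial i f x) (at 0)"
proof -
  have "((\<lambda>t::real. x + t *\<^sub>R axis i 1) has_derivative (\<lambda>t. t *\<^sub>R axis i 1)) (at 0)"
    by (auto intro!: derivative_eq_intros)
  then have g: "(\<lambda>t::real. x + t *\<^sub>R axis i 1) differentiable (at 0)"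
    by (rule differentiableI)
  have "f differentiable at ((\<lambda>t::real. x + t *\<^sub>R axis i 1) 0)" using assms by simp
  then have "(f \<circ> (\<lambda>t. x + t *\<^sub>R axis i 1)) differentiable at 0"
    by (rule differentiable_chain_at[OF g])
  then show ?thesis unfolding partial_def
    using DERIV_deriv_iff_real_differentiable by (simp add: o_def)
qed

lemma partial_local:
  fixes f g :: "real^'n::finite \<Rightarrow> real"
  assumes "open \<Omega>" "\<forall>y\<in>\<Omega>. f y = g y" "x \<in> \<Omega>"
  shows "partial i f x = partial i g x"
proof -
  obtain e where e: "e > 0" "ball x e \<subseteq> \<Omega>" using assms by (meson openE)
  have "eventually (\<lambda>t::real. f (x + t *\<^sub>R axis i 1) = g (x + t *\<^sub>R axis i 1)) (nhds 0)"
    unfolding eventually_nhds_metric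
  proof (intro exI[of _ e] conjI allI impI)
    fix t :: real assume "dist t 0 < e"
    then have "x + t *\<^sub>R axis i 1 \<in> ball x e" by (simp add: dist_norm norm_axis_1)
    then show "f (x + t *\<^sub>R axis i 1) = g (x + t *\<^sub>R axis i 1)" using e assms(2) by blast
  qed (rule e)
  then show ?thesis unfolding partial_def by (rule deriv_cong_ev) simp
qed

lemma Dmulti_local:
  fixes f g :: "real^'n::finite \<Rightarrow> real"
  assumes "open \<Omega>" "\<forall>y\<in>\<Omega>. f y = g y"
  shows "\<forall>x\<in>\<Omega>. Dmulti \<beta> f x = Dmulti \<beta> g x"
proof (induction \<beta>)
  case Nil then show ?case using assms by simp
next
  case (Cons i js) then show ?case using assms(1) by (simp add: partial_local)
qed

lemma diff_local:
  fixes f g :: "real^'n::finite \<Rightarrow> real"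
  assumes "open \<Omega>" "\<forall>y\<in>\<Omega>. f y = g y" "x \<in> \<Omega>" "f differentiable (at x)"
  shows "g differentiable (at x)"
proof -
  obtain e where e: "e > 0" "ball x e \<subseteq> \<Omega>" using assms by (meson openE)
  show ?thesis
    apply (rule differentiable_transform_within[OF assms(4) e(1)])
    using e assms(2) by (auto simp: dist_commute subset_iff)
qed

lemma uc_local:
  fixes f g :: "'a::metric_space \<Rightarrow> 'b::metric_space"
  assumes "\<forall>y\<in>\<Omega>. f y = g y" "uniformly_continuous_on \<Omega> f"
  shows "uniformly_continuous_on \<Omega> g"
  unfolding uniformly_continuous_on_def
proof (intro allI impI)
  fix e :: real assume "e > 0"
  then obtain d where "d > 0" "\<forall>x\<in>\<Omega>. \<forall>x'\<in>\<Omega>. dist x' x < d \<longrightarrow> dist (f x') (f x) < e"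
    using assms(2) unfolding uniformly_continuous_on_def by metis
  then show "\<exists>d>0. \<forall>x\<in>\<Omega>. \<forall>x'\<in>\<Omega>. dist x' x < d \<longrightarrow> dist (g x') (g x) < e"
    using assms(1) by (intro exI[of _ d]) auto
qed

lemma partial_add:
  fixes f g :: "real^'n::finite \<Rightarrow> real"
  assumes "f differentiable (at x)" "g differentiable (at x)"
  shows "partial i (\<lambda>y. f y + g y) x = partial i f x + partial i g x"
  unfolding partial_def[of i "\<lambda>y. f y + g y"]
  by (rule DERIV_imp_deriv, rule DERIV_add[OF line_deriv[OF assms(1)] line_deriv[OF assms(2)]])

lemma partial_mult:
  fixes f g :: "real^'n::finite \<Rightarrow> real"
  assumes "f differentiable (at x)" "g differentiable (at x)"
  shows "partial i (\<lambda>y. f y * g y) x = partial i f x * g x + f x * partial i g x"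
  unfolding partial_def[of i "\<lambda>y. f y * g y"]
  by (subst DERIV_imp_deriv[OF DERIV_mult[OF line_deriv[OF assms(1)] line_deriv[OF assms(2)]]]) (simp add: algebra_simps)

lemma partial_cmult:
  fixes f :: "real^'n::finite \<Rightarrow> real"
  assumes "f differentiable (at x)"
  shows "partial i (\<lambda>y. c * f y) x = c * partial i f x"
  unfolding partial_def[of i "\<lambda>y. c * f y"]
  by (rule DERIV_imp_deriv, rule DERIV_cmult[OF line_deriv[OF assms(1)]])

lemma partial_inverse:
  fixes f :: "real^'n::finite \<Rightarrow> real"
  assumes "f differentiable (at x)" "f x \<noteq> 0"
  shows "partial i (\<lambda>y. inverse (f y)) x = (-1) * (partial i f x * (inverse (f x) * inverse (f x)))"
proof -
  have "((\<lambda>t. inverse (f (x + t *\<^sub>R axis i 1))) has_real_derivative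
      - (partial i f x * inverse (f x ^ Suc (Suc 0)))) (at 0)"
    using DERIV_inverse_fun[OF line_deriv[OF assms(1)]] assms(2) by simp
  then show ?thesis unfolding partial_def[of i "\<lambda>y. inverse (f y)"]
    by (subst DERIV_imp_deriv, assumption) (simp add: power2_eq_square field_simps)
qed

lemma partial_const: "partial i (\<lambda>y. c) = (\<lambda>x. 0)"
  unfolding partial_def by (auto intro!: ext DERIV_imp_deriv)

lemma Dmulti_const: "Dmulti \<beta> (\<lambda>y. c) = (\<lambda>x. if \<beta> = [] then c else 0)"
  by (induction \<beta>) (auto simp: partial_const)

lemma Dmulti_append: "Dmulti (xs @ ys) f = Dmulti xs (Dmulti ys f)"
  by (induction xs) auto


definition Fn :: "(real^'n::finite) set \<Rightarrow> nat \<Rightarrow> (real^'n \<Rightarrow> real) \<Rightarrow> bool" where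
  "Fn \<Omega> n f \<longleftrightarrow> (\<forall>\<beta>. length \<beta> \<le> n \<longrightarrow>
     (\<forall>x\<in>\<Omega>. Dmulti \<beta> f differentiable (at x)) \<and> uniformly_continuous_on \<Omega> (Dmulti \<beta> f))"

definition Bd :: "(real^'n::finite) set \<Rightarrow> nat \<Rightarrow> (real^'n \<Rightarrow> real) \<Rightarrow> real \<Rightarrow> bool" where
  "Bd \<Omega> n f M \<longleftrightarrow> (\<forall>\<beta> x. length \<beta> \<le> n \<and> x \<in> \<Omega> \<longrightarrow> \<bar>Dmulti \<beta> f x\<bar> \<le> M)"

lemma Dmulti_snoc: "Dmulti (xs @ [i]) f = Dmulti xs (partial i f)"
  by (simp add: Dmulti_append)

lemma Fn_0: "Fn \<Omega> 0 f \<longleftrightarrow> (\<forall>x\<in>\<Omega>. f differentiable (at x)) \<and> uniformly_continuous_on \<Omega> f"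
  by (simp add: Fn_def)

lemma Fn_Suc: fixes \<Omega> :: "(real^'n::finite) set" shows "Fn \<Omega> (Suc n) f \<longleftrightarrow> Fn \<Omega> 0 f \<and> (\<forall>i. Fn \<Omega> n (partial i f))"
proof
  assume A: "Fn \<Omega> (Suc n) f"
  show "Fn \<Omega> 0 f \<and> (\<forall>i. Fn \<Omega> n (partial i f))"
  proof
    show "Fn \<Omega> 0 f" using A[unfolded Fn_def, rule_format, of "[]"] by (simp add: Fn_0)
    show "\<forall>i. Fn \<Omega> n (partial i f)"
    proof (intro allI, unfold Fn_def, intro allI impI)
      fix i :: 'n and \<beta> :: "'n list" assume "length \<beta> \<le> n"
      then have "length (\<beta> @ [i]) \<le> Suc n" by simp
      then show "(\<forall>x\<in>\<Omega>. Dmulti \<beta> (partial i f) differentiable at x) \<and>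
         uniformly_continuous_on \<Omega> (Dmulti \<beta> (partial i f))"
        using A[unfolded Fn_def, rule_format, of "\<beta>@[i]"] by (simp add: Dmulti_snoc)
    qed
  qed
next
  assume A: "Fn \<Omega> 0 f \<and> (\<forall>i. Fn \<Omega> n (partial i f))"
  show "Fn \<Omega> (Suc n) f" unfolding Fn_def
  proof (intro allI impI)
    fix \<beta> :: "'n list" assume L: "length \<beta> \<le> Suc n"
    show "(\<forall>x\<in>\<Omega>. Dmulti \<beta> f differentiable at x) \<and> uniformly_continuous_on \<Omega> (Dmulti \<beta> f)"
    proof (cases \<beta> rule: rev_cases)
      case Nil then show ?thesis using A by (simp add: Fn_def)
    next
      case (snoc ys y)
      then show ?thesis using A L unfolding Fn_def by (auto simp: Dmulti_snoc)
    qed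
  qed
qed

lemma Bd_0: "Bd \<Omega> 0 f M \<longleftrightarrow> (\<forall>x\<in>\<Omega>. \<bar>f x\<bar> \<le> M)"
  by (auto simp add: Bd_def)

lemma Bd_Suc: fixes \<Omega> :: "(real^'n::finite) set" shows "Bd \<Omega> (Suc n) f M \<longleftrightarrow> Bd \<Omega> 0 f M \<and> (\<forall>i. Bd \<Omega> n (partial i f) M)"
proof
  assume A: "Bd \<Omega> (Suc n) f M"
  show "Bd \<Omega> 0 f M \<and> (\<forall>i. Bd \<Omega> n (partial i f) M)"
  proof
    show "Bd \<Omega> 0 f M" using A[unfolded Bd_def, rule_format, of "[]"] by (auto simp add: Bd_0)
    show "\<forall>i. Bd \<Omega> n (partial i f) M"
    proof (intro allI, unfold Bd_def, intro allI impI)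
      fix i :: 'n and \<beta> :: "'n list" and x assume "length \<beta> \<le> n \<and> x \<in> \<Omega>"
      then have "length (\<beta> @ [i]) \<le> Suc n \<and> x \<in> \<Omega>" by simp
      then show "\<bar>Dmulti \<beta> (partial i f) x\<bar> \<le> M"
        using A[unfolded Bd_def, rule_format, of "\<beta>@[i]"] by (simp add: Dmulti_snoc)
    qed
  qed
next
  assume A: "Bd \<Omega> 0 f M \<and> (\<forall>i. Bd \<Omega> n (partial i f) M)"
  show "Bd \<Omega> (Suc n) f M" unfolding Bd_def
  proof (intro allI impI)
    fix \<beta> :: "'n list" and x assume L: "length \<beta> \<le> Suc n \<and> x \<in> \<Omega>"
    show "\<bar>Dmulti \<beta> f x\<bar> \<le> M"
    proof (cases \<beta> rule: rev_cases)
      case Nil then show ?thesis using A L by (simp add: Bd_def)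
    next
      case (snoc ys y)
      then show ?thesis using A L unfolding Bd_def by (auto simp: Dmulti_snoc)
    qed
  qed
qed

lemma Fn_mono: "Fn \<Omega> n f \<Longrightarrow> m \<le> n \<Longrightarrow> Fn \<Omega> m f"
  unfolding Fn_def by auto

lemma Bd_mono: fixes \<Omega> :: "(real^'n::finite) set" assumes "Bd \<Omega> n f M" "m \<le> n" "M \<le> M'" shows "Bd \<Omega> m f M'"
  unfolding Bd_def
proof (intro allI impI)
  fix \<beta> :: "'n list" and x assume "length \<beta> \<le> m \<and> x \<in> \<Omega>"
  then have "\<bar>Dmulti \<beta> f x\<bar> \<le> M" using assms(1,2) unfolding Bd_def by auto
  then show "\<bar>Dmulti \<beta> f x\<bar> \<le> M'" using assms(3) by linarith
qed

lemma Bd_nonneg: fixes \<Omega> :: "(real^'n::finite) set" assumes "Bd \<Omega> n f M" "x \<in> \<Omega>" shows "0 \<le> M"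
proof -
  have "\<bar>Dmulti [] f x\<bar> \<le> M" using assms(1)[unfolded Bd_def, rule_format, of "[]" x] assms(2) by simp
  then show ?thesis by linarith
qed

lemma Fn_partial: "Fn \<Omega> (Suc n) f \<Longrightarrow> Fn \<Omega> n (partial i f)"
  by (simp add: Fn_Suc)

lemma Bd_partial: "Bd \<Omega> (Suc n) f M \<Longrightarrow> Bd \<Omega> n (partial i f) M"
  by (simp add: Bd_Suc)

lemma Fn_cong: fixes \<Omega> :: "(real^'n::finite) set" assumes "open \<Omega>" "\<forall>x\<in>\<Omega>. f x = g x" "Fn \<Omega> n f" shows "Fn \<Omega> n g"
  unfolding Fn_def
proof (intro allI impI conjI ballI)
  fix \<beta> :: "'n list" assume L: "length \<beta> \<le> n"
  have E: "\<forall>x\<in>\<Omega>. Dmulti \<beta> f x = Dmulti \<beta> g x" by (rule Dmulti_local[OF assms(1,2)])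
  fix x assume "x \<in> \<Omega>"
  then show "Dmulti \<beta> g differentiable at x"
    using diff_local[OF assms(1) E] assms(3) L unfolding Fn_def by blast
next
  fix \<beta> :: "'n list" assume L: "length \<beta> \<le> n"
  have E: "\<forall>x\<in>\<Omega>. Dmulti \<beta> f x = Dmulti \<beta> g x" by (rule Dmulti_local[OF assms(1,2)])
  show "uniformly_continuous_on \<Omega> (Dmulti \<beta> g)"
    using uc_local[OF E] assms(3) L unfolding Fn_def by blast
qed

lemma Bd_cong: fixes \<Omega> :: "(real^'n::finite) set" assumes "open \<Omega>" "\<forall>x\<in>\<Omega>. f x = g x" "Bd \<Omega> n f M" shows "Bd \<Omega> n g M"
  unfolding Bd_def
proof (intro allI impI)
  fix \<beta> :: "'n list" and x assume L: "length \<beta> \<le> n \<and> x \<in> \<Omega>"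
  have E: "\<forall>x\<in>\<Omega>. Dmulti \<beta> f x = Dmulti \<beta> g x" by (rule Dmulti_local[OF assms(1,2)])
  then show "\<bar>Dmulti \<beta> g x\<bar> \<le> M" using assms(3)[unfolded Bd_def, rule_format, of \<beta> x] L by simp
qed

lemma Fn_D0: fixes \<Omega> :: "(real^'n::finite) set" assumes "Fn \<Omega> n f" "x \<in> \<Omega>" shows "f differentiable (at x)"
  using assms unfolding Fn_def by (metis Dmulti.simps(1) le0 list.size(3))

lemma Fn_const: "Fn \<Omega> n (\<lambda>x. c)"
  unfolding Fn_def Dmulti_const by (auto intro: uniformly_continuous_on_const)

lemma Fn0_add: "Fn \<Omega> 0 f \<Longrightarrow> Fn \<Omega> 0 g \<Longrightarrow> Fn \<Omega> 0 (\<lambda>x. f x + g x)"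
  unfolding Fn_0 by (blast intro: differentiable_add uniformly_continuous_on_add)

lemma Fn0_cmult: "Fn \<Omega> 0 f \<Longrightarrow> Fn \<Omega> 0 (\<lambda>x. c * f x)"
  unfolding Fn_0 by (simp add: differentiable_cmult_left_iff uniformly_continuous_on_cmul_left)

lemma Fn_add: fixes \<Omega> :: "(real^'n::finite) set" shows "open \<Omega> \<Longrightarrow> Fn \<Omega> n f \<Longrightarrow> Fn \<Omega> n g \<Longrightarrow> Fn \<Omega> n (\<lambda>x. f x + g x)"
proof (induction n arbitrary: f g)
  case 0
  then show ?case by (blast intro: Fn0_add)
next
  case (Suc n)
  have A: "Fn \<Omega> n (\<lambda>x. partial i f x + partial i g x)" for i
    by (rule Suc.IH[OF Suc.prems(1) Fn_partial[OF Suc.prems(2)] Fn_partial[OF Suc.prems(3)]])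
  have E: "\<forall>x\<in>\<Omega>. partial i f x + partial i g x = partial i (\<lambda>y. f y + g y) x" for i
    using Suc.prems by (simp add: partial_add Fn_D0)
  have "Fn \<Omega> n (partial i (\<lambda>y. f y + g y))" for i
    by (rule Fn_cong[OF Suc.prems(1) E A])
  moreover have "Fn \<Omega> 0 (\<lambda>x. f x + g x)"
    using Fn0_add Fn_mono Suc.prems(2,3) zero_le by blast
  ultimately show ?case by (simp add: Fn_Suc)
qed

lemma Fn_cmult: fixes \<Omega> :: "(real^'n::finite) set" shows "open \<Omega> \<Longrightarrow> Fn \<Omega> n f \<Longrightarrow> Fn \<Omega> n (\<lambda>x. c * f x)"
proof (induction n arbitrary: f)
  case 0
  then show ?case by (blast intro: Fn0_cmult)
next
  case (Suc n)
  have A: "Fn \<Omega> n (\<lambda>x. c * partial i f x)" for i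
    by (rule Suc.IH[OF Suc.prems(1) Fn_partial[OF Suc.prems(2)]])
  have E: "\<forall>x\<in>\<Omega>. c * partial i f x = partial i (\<lambda>y. c * f y) x" for i
    using Suc.prems by (simp add: partial_cmult Fn_D0)
  have "Fn \<Omega> n (partial i (\<lambda>y. c * f y))" for i
    by (rule Fn_cong[OF Suc.prems(1) E A])
  moreover have "Fn \<Omega> 0 (\<lambda>x. c * f x)"
    using Fn0_cmult Fn_mono Suc.prems(2) zero_le by blast
  ultimately show ?case by (simp add: Fn_Suc)
qed


lemma uc_mult:
  fixes f g :: "real^'n::finite \<Rightarrow> real"
  assumes uf: "uniformly_continuous_on \<Omega> f" and ug: "uniformly_continuous_on \<Omega> g"
    and bf: "\<forall>x\<in>\<Omega>. \<bar>f x\<bar> \<le> B" and bg: "\<forall>x\<in>\<Omega>. \<bar>g x\<bar> \<le> B" and B: "B > 0"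
  shows "uniformly_continuous_on \<Omega> (\<lambda>x. f x * g x)"
  unfolding uniformly_continuous_on_def
proof (intro allI impI)
  fix e :: real assume e: "e > 0"
  then have e2: "e / (2*B) > 0" using B by simp
  obtain d1 where d1: "d1 > 0" "\<forall>x\<in>\<Omega>. \<forall>x'\<in>\<Omega>. dist x' x < d1 \<longrightarrow> dist (f x') (f x) < e / (2*B)"
    using uf e2 unfolding uniformly_continuous_on_def by meson
  obtain d2 where d2: "d2 > 0" "\<forall>x\<in>\<Omega>. \<forall>x'\<in>\<Omega>. dist x' x < d2 \<longrightarrow> dist (g x') (g x) < e / (2*B)"
    using ug e2 unfolding uniformly_continuous_on_def by meson
  show "\<exists>d>0. \<forall>x\<in>\<Omega>. \<forall>x'\<in>\<Omega>. dist x' x < d \<longrightarrow> dist (f x' * g x') (f x * g x) < e"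
  proof (intro exI[of _ "min d1 d2"] conjI ballI impI)
    show "min d1 d2 > 0" using d1 d2 by simp
    fix x x' assume x: "x \<in> \<Omega>" "x' \<in> \<Omega>" and "dist x' x < min d1 d2"
    then have a: "\<bar>f x' - f x\<bar> < e/(2*B)" and b: "\<bar>g x' - g x\<bar> < e/(2*B)"
      using d1 d2 by (auto simp: dist_real_def)
    have "f x' * g x' - f x * g x = f x' * (g x' - g x) + g x * (f x' - f x)"
      by (simp add: algebra_simps)
    then have "\<bar>f x' * g x' - f x * g x\<bar> \<le> \<bar>f x'\<bar> * \<bar>g x' - g x\<bar> + \<bar>g x\<bar> * \<bar>f x' - f x\<bar>"
      by (simp add: abs_mult[symmetric] abs_triangle_ineq)
    also have "\<dots> \<le> B * \<bar>g x' - g x\<bar> + B * \<bar>f x' - f x\<bar>"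
      using bf bg x by (intro add_mono mult_right_mono) auto
    also have "\<dots> < B * (e/(2*B)) + B * (e/(2*B))"
      using a b B by (intro add_strict_mono mult_strict_left_mono) auto
    also have "\<dots> = e" using B by (simp add: field_simps)
    finally show "dist (f x' * g x') (f x * g x) < e" by (simp add: dist_real_def)
  qed
qed

lemma uc_inverse:
  fixes f :: "real^'n::finite \<Rightarrow> real"
  assumes uf: "uniformly_continuous_on \<Omega> f" and c: "c > 0" and lb: "\<forall>x\<in>\<Omega>. c \<le> \<bar>f x\<bar>"
  shows "uniformly_continuous_on \<Omega> (\<lambda>x. inverse (f x))"
  unfolding uniformly_continuous_on_def
proof (intro allI impI)
  fix e :: real assume e: "e > 0"
  then have e2: "e * (c*c) > 0" using c by simp
  obtain d where d: "d > 0" "\<forall>x\<in>\<Omega>. \<forall>x'\<in>\<Omega>. dist x' x < d \<longrightarrow> dist (f x') (f x) < e * (c*c)"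
    using uf e2 unfolding uniformly_continuous_on_def by meson
  show "\<exists>d>0. \<forall>x\<in>\<Omega>. \<forall>x'\<in>\<Omega>. dist x' x < d \<longrightarrow> dist (inverse (f x')) (inverse (f x)) < e"
  proof (intro exI[of _ d] conjI ballI impI)
    show "d > 0" by (rule d)
    fix x x' assume x: "x \<in> \<Omega>" "x' \<in> \<Omega>" and "dist x' x < d"
    then have a: "\<bar>f x' - f x\<bar> < e * (c*c)" using d by (auto simp: dist_real_def)
    have fx: "c \<le> \<bar>f x\<bar>" "c \<le> \<bar>f x'\<bar>" using lb x by auto
    then have nz: "f x \<noteq> 0" "f x' \<noteq> 0" using c by auto
    have "inverse (f x') - inverse (f x) = (f x - f x') / (f x' * f x)"
      using nz by (simp add: field_simps)
    then have "\<bar>inverse (f x') - inverse (f x)\<bar> = \<bar>f x' - f x\<bar> / (\<bar>f x'\<bar> * \<bar>f x\<bar>)"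
      by (simp add: abs_mult abs_minus_commute)
    also have "\<dots> \<le> \<bar>f x' - f x\<bar> / (c * c)"
      using fx c by (intro divide_left_mono mult_mono) auto
    also have "\<dots> < e" using a c by (simp add: field_simps)
    finally show "dist (inverse (f x')) (inverse (f x)) < e" by (simp add: dist_real_def)
  qed
qed

lemma uc_bounded:
  fixes f :: "real^'n::finite \<Rightarrow> real"
  assumes "uniformly_continuous_on \<Omega> f" "bounded \<Omega>"
  shows "\<exists>B>0. \<forall>x\<in>\<Omega>. \<bar>f x\<bar> \<le> B"
proof -
  have "bounded (f ` \<Omega>)" by (rule bounded_uniformly_continuous_image[OF assms])
  then show ?thesis unfolding bounded_pos by auto
qed

lemma Fn_mult:
  fixes \<Omega> :: "(real^'n::finite) set"
  shows "open \<Omega> \<Longrightarrow> bounded \<Omega> \<Longrightarrow> Fn \<Omega> n f \<Longrightarrow> Fn \<Omega> n g \<Longrightarrow> Fn \<Omega> n (\<lambda>x. f x * g x)"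
proof (induction n arbitrary: f g)
  case 0
  then have uf: "uniformly_continuous_on \<Omega> f" and ug: "uniformly_continuous_on \<Omega> g"
    by (auto simp: Fn_0)
  obtain B1 where B1: "B1 > 0" "\<forall>x\<in>\<Omega>. \<bar>f x\<bar> \<le> B1" using uc_bounded[OF uf 0(2)] by blast
  obtain B2 where B2: "B2 > 0" "\<forall>x\<in>\<Omega>. \<bar>g x\<bar> \<le> B2" using uc_bounded[OF ug 0(2)] by blast
  have "\<forall>x\<in>\<Omega>. \<bar>f x\<bar> \<le> B1 + B2" "\<forall>x\<in>\<Omega>. \<bar>g x\<bar> \<le> B1 + B2"
    using B1 B2 by force+
  then have "uniformly_continuous_on \<Omega> (\<lambda>x. f x * g x)"
    using uc_mult[OF uf ug] B1 B2 by auto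
  moreover have "\<forall>x\<in>\<Omega>. (\<lambda>x. f x * g x) differentiable at x"
    using 0 unfolding Fn_0 by (blast intro: differentiable_mult)
  ultimately show ?case unfolding Fn_0 by blast
next
  case (Suc n)
  have f': "Fn \<Omega> n f" "Fn \<Omega> n g" using Fn_mono Suc.prems(3,4) le_SucI by blast+
  have "Fn \<Omega> n (\<lambda>x. partial i f x * g x)" "Fn \<Omega> n (\<lambda>x. f x * partial i g x)" for i
    using Suc.IH[OF Suc.prems(1,2) Fn_partial[OF Suc.prems(3)] f'(2)]
      Suc.IH[OF Suc.prems(1,2) f'(1) Fn_partial[OF Suc.prems(4)]] by auto
  then have A: "Fn \<Omega> n (\<lambda>x. partial i f x * g x + f x * partial i g x)" for i
    using Fn_add[OF Suc.prems(1)] by blast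
  have E: "\<forall>x\<in>\<Omega>. partial i f x * g x + f x * partial i g x = partial i (\<lambda>y. f y * g y) x" for i
    using Suc.prems by (simp add: partial_mult Fn_D0)
  have "Fn \<Omega> n (partial i (\<lambda>y. f y * g y))" for i
    by (rule Fn_cong[OF Suc.prems(1) E A])
  moreover have "Fn \<Omega> 0 (\<lambda>x. f x * g x)"
    using Suc.IH[OF Suc.prems(1,2) f'] Fn_mono[of \<Omega> n _ 0] by auto
  ultimately show ?case by (simp add: Fn_Suc)
qed

lemma Fn_inverse:
  fixes \<Omega> :: "(real^'n::finite) set"
  assumes "open \<Omega>" "bounded \<Omega>" "c > 0" "\<forall>x\<in>\<Omega>. c \<le> \<bar>f x\<bar>"
  shows "Fn \<Omega> n f \<Longrightarrow> Fn \<Omega> n (\<lambda>x. inverse (f x))"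
proof (induction n)
  case 0
  have "\<forall>x\<in>\<Omega>. f x \<noteq> 0" using assms(3,4) by force
  then have "\<forall>x\<in>\<Omega>. (\<lambda>x. inverse (f x)) differentiable at x"
    using 0 unfolding Fn_0 by (blast intro: differentiable_inverse)
  moreover have "uniformly_continuous_on \<Omega> (\<lambda>x. inverse (f x))"
    using 0 uc_inverse[OF _ assms(3,4)] unfolding Fn_0 by blast
  ultimately show ?case unfolding Fn_0 by blast
next
  case (Suc n)
  have nz: "\<forall>x\<in>\<Omega>. f x \<noteq> 0" using assms(3,4) by force
  have IH: "Fn \<Omega> n (\<lambda>x. inverse (f x))" using Suc Fn_mono le_SucI by blast
  have A: "Fn \<Omega> n (\<lambda>x. (-1) * (partial i f x * (inverse (f x) * inverse (f x))))" for i
    by (rule Fn_cmult[OF assms(1)], rule Fn_mult[OF assms(1,2) Fn_partial[OF Suc.prems]], rule Fn_mult[OF assms(1,2) IH IH])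
  have E: "\<forall>x\<in>\<Omega>. (-1) * (partial i f x * (inverse (f x) * inverse (f x))) = partial i (\<lambda>y. inverse (f y)) x" for i
    using Suc.prems nz by (simp add: partial_inverse Fn_D0)
  have "Fn \<Omega> n (partial i (\<lambda>y. inverse (f y)))" for i
    by (rule Fn_cong[OF assms(1) E A])
  moreover have "Fn \<Omega> 0 (\<lambda>x. inverse (f x))"
    using IH Fn_mono[of \<Omega> n _ 0] by auto
  ultimately show ?case by (simp add: Fn_Suc)
qed

lemma Bd_empty: "\<Omega> = {} \<Longrightarrow> Bd \<Omega> n f M"
  by (simp add: Bd_def)

lemma Bd_const: "Bd \<Omega> n (\<lambda>x. c) \<bar>c\<bar>"
  by (simp add: Bd_def Dmulti_const)



lemma Bd_add:
  fixes \<Omega> :: "(real^'n::finite) set"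
  shows "open \<Omega> \<Longrightarrow> Fn \<Omega> n f \<Longrightarrow> Fn \<Omega> n g \<Longrightarrow> Bd \<Omega> n f M1 \<Longrightarrow> Bd \<Omega> n g M2 \<Longrightarrow>
    Bd \<Omega> n (\<lambda>x. f x + g x) (M1 + M2)"
proof (induction n arbitrary: f g)
  case 0
  then show ?case unfolding Bd_0 by (meson abs_triangle_ineq add_mono order_trans)
next
  case (Suc n)
  have A: "Bd \<Omega> n (\<lambda>x. partial i f x + partial i g x) (M1 + M2)" for i
    by (rule Suc.IH[OF Suc.prems(1) Fn_partial[OF Suc.prems(2)] Fn_partial[OF Suc.prems(3)]
          Bd_partial[OF Suc.prems(4)] Bd_partial[OF Suc.prems(5)]])
  have E: "\<forall>x\<in>\<Omega>. partial i f x + partial i g x = partial i (\<lambda>y. f y + g y) x" for i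
    using Suc.prems by (simp add: partial_add Fn_D0)
  have "Bd \<Omega> n (partial i (\<lambda>y. f y + g y)) (M1 + M2)" for i
    by (rule Bd_cong[OF Suc.prems(1) E A])
  moreover have "Bd \<Omega> 0 (\<lambda>x. f x + g x) (M1 + M2)"
    using Suc.prems(4,5) unfolding Bd_Suc Bd_0 by (meson abs_triangle_ineq add_mono order_trans)
  ultimately show ?case by (simp add: Bd_Suc)
qed

lemma Bd_cmult:
  fixes \<Omega> :: "(real^'n::finite) set"
  shows "open \<Omega> \<Longrightarrow> Fn \<Omega> n f \<Longrightarrow> Bd \<Omega> n f M \<Longrightarrow> Bd \<Omega> n (\<lambda>x. c * f x) (\<bar>c\<bar> * M)"
proof (induction n arbitrary: f)
  case 0
  then show ?case unfolding Bd_0 by (simp add: abs_mult mult_left_mono)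
next
  case (Suc n)
  have A: "Bd \<Omega> n (\<lambda>x. c * partial i f x) (\<bar>c\<bar> * M)" for i
    by (rule Suc.IH[OF Suc.prems(1) Fn_partial[OF Suc.prems(2)] Bd_partial[OF Suc.prems(3)]])
  have E: "\<forall>x\<in>\<Omega>. c * partial i f x = partial i (\<lambda>y. c * f y) x" for i
    using Suc.prems by (simp add: partial_cmult Fn_D0)
  have "Bd \<Omega> n (partial i (\<lambda>y. c * f y)) (\<bar>c\<bar> * M)" for i
    by (rule Bd_cong[OF Suc.prems(1) E A])
  moreover have "Bd \<Omega> 0 (\<lambda>x. c * f x) (\<bar>c\<bar> * M)"
    using Suc.prems(3) unfolding Bd_Suc Bd_0 by (simp add: abs_mult mult_left_mono)
  ultimately show ?case by (simp add: Bd_Suc)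
qed

lemma Bd_mult:
  fixes \<Omega> :: "(real^'n::finite) set"
  shows "open \<Omega> \<Longrightarrow> bounded \<Omega> \<Longrightarrow> Fn \<Omega> n f \<Longrightarrow> Fn \<Omega> n g \<Longrightarrow> Bd \<Omega> n f M1 \<Longrightarrow> Bd \<Omega> n g M2 \<Longrightarrow>
    Bd \<Omega> n (\<lambda>x. f x * g x) (2^n * M1 * M2)"
proof (induction n arbitrary: f g)
  case 0
  then show ?case unfolding Bd_0 by (simp add: abs_mult mult_mono' order_trans[OF abs_ge_zero])
next
  case (Suc n)
  show ?case
  proof (cases "\<Omega> = {}")
    case True then show ?thesis by (rule Bd_empty)
  next
    case False
    then obtain x0 where x0: "x0 \<in> \<Omega>" by blast
    have M: "0 \<le> M1" "0 \<le> M2" using Bd_nonneg[OF Suc.prems(5) x0] Bd_nonneg[OF Suc.prems(6) x0] .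
    have f': "Fn \<Omega> n f" "Fn \<Omega> n g" using Fn_mono Suc.prems(3,4) le_SucI by blast+
    have b': "Bd \<Omega> n f M1" "Bd \<Omega> n g M2"
      using Bd_mono[OF Suc.prems(5), of n M1] Bd_mono[OF Suc.prems(6), of n M2] by auto
    have A1: "Bd \<Omega> n (\<lambda>x. partial i f x * g x) (2^n * M1 * M2)" for i
      by (rule Suc.IH[OF Suc.prems(1,2) Fn_partial[OF Suc.prems(3)] f'(2) Bd_partial[OF Suc.prems(5)] b'(2)])
    have A2: "Bd \<Omega> n (\<lambda>x. f x * partial i g x) (2^n * M1 * M2)" for i
      by (rule Suc.IH[OF Suc.prems(1,2) f'(1) Fn_partial[OF Suc.prems(4)] b'(1) Bd_partial[OF Suc.prems(6)]])
    have A: "Bd \<Omega> n (\<lambda>x. partial i f x * g x + f x * partial i g x) (2^n * M1 * M2 + 2^n * M1 * M2)" for i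
      by (rule Bd_add[OF Suc.prems(1) Fn_mult[OF Suc.prems(1,2) Fn_partial[OF Suc.prems(3)] f'(2)]
            Fn_mult[OF Suc.prems(1,2) f'(1) Fn_partial[OF Suc.prems(4)]] A1 A2])
    have E: "\<forall>x\<in>\<Omega>. partial i f x * g x + f x * partial i g x = partial i (\<lambda>y. f y * g y) x" for i
      using Suc.prems by (simp add: partial_mult Fn_D0)
    have "Bd \<Omega> n (partial i (\<lambda>y. f y * g y)) (2^Suc n * M1 * M2)" for i
    proof -
      have eq: "2^n * M1 * M2 + 2^n * M1 * M2 = (2::real)^Suc n * M1 * M2" by simp
      show ?thesis using Bd_cong[OF Suc.prems(1) E A] unfolding eq .
    qed
    moreover have "Bd \<Omega> 0 (\<lambda>x. f x * g x) (2^Suc n * M1 * M2)"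
    proof -
      have "2^n * M1 * M2 \<le> 2^Suc n * M1 * M2"
        using M by (intro mult_right_mono) auto
      then show ?thesis using Bd_mono[OF Suc.IH[OF Suc.prems(1,2) f' b'], of 0] by blast
    qed
    ultimately show ?thesis by (simp add: Bd_Suc)
  qed
qed

lemma Bd_inverse:
  fixes \<Omega> :: "(real^'n::finite) set"
  assumes "open \<Omega>" "bounded \<Omega>" "c > 0" "\<forall>x\<in>\<Omega>. c \<le> \<bar>f x\<bar>"
    and F: "Fn \<Omega> (Suc n) f" and BF: "Bd \<Omega> (Suc n) f Mf" and BG: "Bd \<Omega> n (\<lambda>x. inverse (f x)) Mg"
  shows "Bd \<Omega> (Suc n) (\<lambda>x. inverse (f x)) (Mg + 2^n * Mf * (2^n * Mg * Mg))"
proof (cases "\<Omega> = {}")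
  case True then show ?thesis by (rule Bd_empty)
next
  case False
  then obtain x0 where x0: "x0 \<in> \<Omega>" by blast
  have M: "0 \<le> Mf" "0 \<le> Mg" using Bd_nonneg[OF BF x0] Bd_nonneg[OF BG x0] .
  have nz: "\<forall>x\<in>\<Omega>. f x \<noteq> 0" using assms(3,4) by force
  have Fg: "Fn \<Omega> n (\<lambda>x. inverse (f x))"
    by (rule Fn_inverse[OF assms(1-4)], rule Fn_mono[OF F]) simp
  have Fgg: "Fn \<Omega> n (\<lambda>x. inverse (f x) * inverse (f x))" by (rule Fn_mult[OF assms(1,2) Fg Fg])
  have Bgg: "Bd \<Omega> n (\<lambda>x. inverse (f x) * inverse (f x)) (2^n * Mg * Mg)"
    by (rule Bd_mult[OF assms(1,2) Fg Fg BG BG])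
  have A: "Bd \<Omega> n (\<lambda>x. (-1) * (partial i f x * (inverse (f x) * inverse (f x)))) (\<bar>-1\<bar> * (2^n * Mf * (2^n * Mg * Mg)))" for i
    by (rule Bd_cmult[OF assms(1) Fn_mult[OF assms(1,2) Fn_partial[OF F] Fgg]
          Bd_mult[OF assms(1,2) Fn_partial[OF F] Fgg Bd_partial[OF BF] Bgg]])
  have E: "\<forall>x\<in>\<Omega>. (-1) * (partial i f x * (inverse (f x) * inverse (f x))) = partial i (\<lambda>y. inverse (f y)) x" for i
    using F nz by (simp add: partial_inverse Fn_D0)
  have X: "0 \<le> 2^n * Mf * (2^n * Mg * Mg)" using M by simp
  have "Bd \<Omega> n (partial i (\<lambda>y. inverse (f y))) (Mg + 2^n * Mf * (2^n * Mg * Mg))" for i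
  proof -
    have "Bd \<Omega> n (partial i (\<lambda>y. inverse (f y))) (2^n * Mf * (2^n * Mg * Mg))"
      using Bd_cong[OF assms(1) E A] by simp
    then show ?thesis using Bd_mono[of \<Omega> n _ "2^n * Mf * (2^n * Mg * Mg)" n] M by simp
  qed
  moreover have "Bd \<Omega> 0 (\<lambda>x. inverse (f x)) (Mg + 2^n * Mf * (2^n * Mg * Mg))"
    using Bd_mono[OF BG, of 0 "Mg + 2^n * Mf * (2^n * Mg * Mg)"] X by simp
  ultimately show ?thesis by (simp add: Bd_Suc)
qed




lemma smooth_closure_Fn: "smooth_closure \<Omega> f \<longleftrightarrow> (\<forall>n. Fn \<Omega> n f)"
  unfolding smooth_closure_def Fn_def by (meson order_refl)

lemma ev_iff: "(\<exists>\<epsilon>0>0. \<forall>\<epsilon>\<in>{0<..<\<epsilon>0}. P \<epsilon>) \<longleftrightarrow> eventually P (at_right (0::real))"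
  unfolding eventually_at_right_field by auto

definition SM :: "(real^'n::finite) set \<Rightarrow> (real \<Rightarrow> real^'n \<Rightarrow> real) \<Rightarrow> bool" where
  "SM \<Omega> U \<longleftrightarrow> eventually (\<lambda>\<epsilon>. \<forall>n. Fn \<Omega> n (U \<epsilon>)) (at_right 0)"

definition MB :: "(real^'n::finite) set \<Rightarrow> (real \<Rightarrow> real^'n \<Rightarrow> real) \<Rightarrow> bool" where
  "MB \<Omega> U \<longleftrightarrow> (\<forall>k. \<exists>a C. eventually (\<lambda>\<epsilon>. Bd \<Omega> k (U \<epsilon>) (C * \<epsilon> powr a)) (at_right 0))"

definition NB :: "(real^'n::finite) set \<Rightarrow> (real \<Rightarrow> real^'n \<Rightarrow> real) \<Rightarrow> bool" where
  "NB \<Omega> U \<longleftrightarrow> (\<forall>k a. \<exists>C. eventually (\<lambda>\<epsilon>. Bd \<Omega> k (U \<epsilon>) (C * \<epsilon> powr a)) (at_right 0))"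

lemma moderate_iff: "moderate \<Omega> U \<longleftrightarrow> SM \<Omega> U \<and> MB \<Omega> U"
proof -
  have 1: "(\<exists>\<epsilon>0>0. \<forall>\<epsilon>\<in>{0<..<\<epsilon>0}. smooth_closure \<Omega> (U \<epsilon>)) \<longleftrightarrow> SM \<Omega> U"
    unfolding SM_def smooth_closure_Fn ev_iff ..
  have 2: "(\<exists>C \<epsilon>0. \<epsilon>0 > 0 \<and> (\<forall>\<epsilon>\<in>{0<..<\<epsilon>0}. \<forall>\<beta> x. length \<beta> \<le> k \<and> x \<in> \<Omega> \<longrightarrow>
            \<bar>Dmulti \<beta> (U \<epsilon>) x\<bar> \<le> C * \<epsilon> powr a)) \<longleftrightarrow>
         (\<exists>C. eventually (\<lambda>\<epsilon>. Bd \<Omega> k (U \<epsilon>) (C * \<epsilon> powr a)) (at_right 0))" for k a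
    unfolding Bd_def[symmetric] ev_iff[symmetric] by blast
  show ?thesis unfolding moderate_def 1 MB_def 2 ..
qed

lemma negligible_iff: "negligible \<Omega> U \<longleftrightarrow> SM \<Omega> U \<and> MB \<Omega> U \<and> NB \<Omega> U"
proof -
  have 2: "(\<exists>C \<epsilon>0. \<epsilon>0 > 0 \<and> (\<forall>\<epsilon>\<in>{0<..<\<epsilon>0}. \<forall>\<beta> x. length \<beta> \<le> k \<and> x \<in> \<Omega> \<longrightarrow>
            \<bar>Dmulti \<beta> (U \<epsilon>) x\<bar> \<le> C * \<epsilon> powr a)) \<longleftrightarrow>
         (\<exists>C. eventually (\<lambda>\<epsilon>. Bd \<Omega> k (U \<epsilon>) (C * \<epsilon> powr a)) (at_right 0))" for k a
    unfolding Bd_def[symmetric] ev_iff[symmetric] by blast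
  show ?thesis unfolding negligible_def moderate_iff NB_def 2 by blast
qed

lemma ev_small: "eventually (\<lambda>\<epsilon>::real. 0 < \<epsilon> \<and> \<epsilon> < 1) (at_right 0)"
  unfolding eventually_at_right_field by (intro exI[of _ 1]) auto

lemma pw_nonneg: "0 \<le> C \<Longrightarrow> 0 \<le> C * (\<epsilon>::real) powr a"
  by simp

lemma pw_le: "0 < \<epsilon> \<Longrightarrow> \<epsilon> < 1 \<Longrightarrow> b \<le> a \<Longrightarrow> 0 \<le> C \<Longrightarrow> C * (\<epsilon>::real) powr a \<le> C * \<epsilon> powr b"
  by (intro mult_left_mono powr_mono') auto

lemma pw_sum: "0 < \<epsilon> \<Longrightarrow> \<epsilon> < 1 \<Longrightarrow> 0 \<le> C1 \<Longrightarrow> 0 \<le> C2 \<Longrightarrow>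
   C1 * (\<epsilon>::real) powr a1 + C2 * \<epsilon> powr a2 \<le> (C1 + C2) * \<epsilon> powr (min a1 a2)"
  using pw_le[of \<epsilon> "min a1 a2" a1 C1] pw_le[of \<epsilon> "min a1 a2" a2 C2] by (simp add: distrib_right)

lemma MB_D: "MB \<Omega> U \<Longrightarrow> \<exists>a C. 0 \<le> C \<and> eventually (\<lambda>\<epsilon>. Bd \<Omega> k (U \<epsilon>) (C * \<epsilon> powr a)) (at_right 0)"
proof -
  assume "MB \<Omega> U"
  then obtain a C where ev: "eventually (\<lambda>\<epsilon>. Bd \<Omega> k (U \<epsilon>) (C * \<epsilon> powr a)) (at_right 0)"
    unfolding MB_def by blast
  have "eventually (\<lambda>\<epsilon>. Bd \<Omega> k (U \<epsilon>) (\<bar>C\<bar> * \<epsilon> powr a)) (at_right 0)"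
    using ev by eventually_elim (rule Bd_mono, assumption, simp, simp add: mult_right_mono)
  then show ?thesis by (intro exI[of _ a] exI[of _ "\<bar>C\<bar>"]) simp
qed

lemma NB_D: "NB \<Omega> U \<Longrightarrow> \<exists>C. 0 \<le> C \<and> eventually (\<lambda>\<epsilon>. Bd \<Omega> k (U \<epsilon>) (C * \<epsilon> powr a)) (at_right 0)"
proof -
  assume "NB \<Omega> U"
  then obtain C where ev: "eventually (\<lambda>\<epsilon>. Bd \<Omega> k (U \<epsilon>) (C * \<epsilon> powr a)) (at_right 0)"
    unfolding NB_def by blast
  have "eventually (\<lambda>\<epsilon>. Bd \<Omega> k (U \<epsilon>) (\<bar>C\<bar> * \<epsilon> powr a)) (at_right 0)"
    using ev by eventually_elim (rule Bd_mono, assumption, simp, simp add: mult_right_mono)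
  then show ?thesis by (intro exI[of _ "\<bar>C\<bar>"]) simp
qed

context
  fixes \<Omega> :: "(real^'n::finite) set"
  assumes op: "open \<Omega>" and bd: "bounded \<Omega>"
begin

lemma SM_add: assumes "SM \<Omega> U" "SM \<Omega> V" shows "SM \<Omega> (\<lambda>\<epsilon> x. U \<epsilon> x + V \<epsilon> x)"
  using assms unfolding SM_def by eventually_elim (blast intro: Fn_add[OF op])

lemma SM_cmult: assumes "SM \<Omega> U" shows "SM \<Omega> (\<lambda>\<epsilon> x. c * U \<epsilon> x)"
  using assms unfolding SM_def by eventually_elim (blast intro: Fn_cmult[OF op])

lemma SM_mult: assumes "SM \<Omega> U" "SM \<Omega> V" shows "SM \<Omega> (\<lambda>\<epsilon> x. U \<epsilon> x * V \<epsilon> x)"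
  using assms unfolding SM_def by eventually_elim (blast intro: Fn_mult[OF op bd])

lemma SM_partial: assumes "SM \<Omega> U" shows "SM \<Omega> (\<lambda>\<epsilon>. partial i (U \<epsilon>))"
  using assms unfolding SM_def by eventually_elim (blast intro: Fn_partial)

lemma SM_const: "SM \<Omega> (\<lambda>\<epsilon> x. c)"
  unfolding SM_def by (simp add: Fn_const)

lemma SM_cong: assumes "eventually (\<lambda>\<epsilon>. \<forall>x\<in>\<Omega>. U \<epsilon> x = V \<epsilon> x) (at_right 0)" "SM \<Omega> U" shows "SM \<Omega> V"
  using assms unfolding SM_def by eventually_elim (blast intro: Fn_cong[OF op])

definition LB :: "(real \<Rightarrow> real^'n \<Rightarrow> real) \<Rightarrow> bool" where
  "LB U \<longleftrightarrow> (\<exists>c>0. \<exists>m::nat. eventually (\<lambda>\<epsilon>. \<forall>x\<in>\<Omega>. c * \<epsilon> ^ m \<le> \<bar>U \<epsilon> x\<bar>) (at_right 0))"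

lemma SM_inverse: "SM \<Omega> U \<Longrightarrow> LB U \<Longrightarrow> SM \<Omega> (\<lambda>\<epsilon> x. inverse (U \<epsilon> x))"
proof -
  assume S: "SM \<Omega> U" and "LB U"
  then obtain c m where c: "c > 0" and ev: "eventually (\<lambda>\<epsilon>. \<forall>x\<in>\<Omega>. c * \<epsilon> ^ m \<le> \<bar>U \<epsilon> x\<bar>) (at_right 0)"
    unfolding LB_def by blast
  show ?thesis using S ev ev_small unfolding SM_def
  proof eventually_elim
    case (elim \<epsilon>)
    have "c * \<epsilon> ^ m > 0" using c elim by simp
    then show ?case using Fn_inverse[OF op bd _ elim(2)] elim(1) by blast
  qed
qed

lemma MB_add: assumes SU: "SM \<Omega> U" and SV: "SM \<Omega> V" and MU: "MB \<Omega> U" and MV: "MB \<Omega> V"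
  shows "MB \<Omega> (\<lambda>\<epsilon> x. U \<epsilon> x + V \<epsilon> x)"
  unfolding MB_def
proof
  fix k
  obtain a1 C1 where 1: "0 \<le> C1" "eventually (\<lambda>\<epsilon>. Bd \<Omega> k (U \<epsilon>) (C1 * \<epsilon> powr a1)) (at_right 0)"
    using MB_D[OF MU] by blast
  obtain a2 C2 where 2: "0 \<le> C2" "eventually (\<lambda>\<epsilon>. Bd \<Omega> k (V \<epsilon>) (C2 * \<epsilon> powr a2)) (at_right 0)"
    using MB_D[OF MV] by blast
  have "eventually (\<lambda>\<epsilon>. Bd \<Omega> k (\<lambda>x. U \<epsilon> x + V \<epsilon> x) ((C1 + C2) * \<epsilon> powr (min a1 a2))) (at_right 0)"
    using 1(2) 2(2) SU SV ev_small unfolding SM_def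
  proof eventually_elim
    case (elim \<epsilon>)
    then show ?case
      using Bd_mono[OF Bd_add[OF op _ _ elim(1) elim(2)], of k] pw_sum[of \<epsilon> C1 C2 a1 a2] 1(1) 2(1) by blast
  qed
  then show "\<exists>a C. eventually (\<lambda>\<epsilon>. Bd \<Omega> k (\<lambda>x. U \<epsilon> x + V \<epsilon> x) (C * \<epsilon> powr a)) (at_right 0)"
    by blast
qed


lemma MB_cong: assumes E: "eventually (\<lambda>\<epsilon>. \<forall>x\<in>\<Omega>. U \<epsilon> x = V \<epsilon> x) (at_right 0)" and M: "MB \<Omega> U"
  shows "MB \<Omega> V"
  unfolding MB_def
proof
  fix k
  obtain a C where 1: "eventually (\<lambda>\<epsilon>. Bd \<Omega> k (U \<epsilon>) (C * \<epsilon> powr a)) (at_right 0)"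
    using M unfolding MB_def by blast
  have "eventually (\<lambda>\<epsilon>. Bd \<Omega> k (V \<epsilon>) (C * \<epsilon> powr a)) (at_right 0)"
    using 1 E by eventually_elim (blast intro: Bd_cong[OF op])
  then show "\<exists>a C. eventually (\<lambda>\<epsilon>. Bd \<Omega> k (V \<epsilon>) (C * \<epsilon> powr a)) (at_right 0)" by blast
qed

lemma NB_cong: assumes E: "eventually (\<lambda>\<epsilon>. \<forall>x\<in>\<Omega>. U \<epsilon> x = V \<epsilon> x) (at_right 0)" and M: "NB \<Omega> U"
  shows "NB \<Omega> V"
  unfolding NB_def
proof (intro allI)
  fix k a
  obtain C where 1: "eventually (\<lambda>\<epsilon>. Bd \<Omega> k (U \<epsilon>) (C * \<epsilon> powr a)) (at_right 0)"
    using M unfolding NB_def by blast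
  have "eventually (\<lambda>\<epsilon>. Bd \<Omega> k (V \<epsilon>) (C * \<epsilon> powr a)) (at_right 0)"
    using 1 E by eventually_elim (blast intro: Bd_cong[OF op])
  then show "\<exists>C. eventually (\<lambda>\<epsilon>. Bd \<Omega> k (V \<epsilon>) (C * \<epsilon> powr a)) (at_right 0)" by blast
qed

lemma MB_partial: assumes M: "MB \<Omega> U" shows "MB \<Omega> (\<lambda>\<epsilon>. partial i (U \<epsilon>))"
  unfolding MB_def
proof
  fix k
  obtain a C where 1: "eventually (\<lambda>\<epsilon>. Bd \<Omega> (Suc k) (U \<epsilon>) (C * \<epsilon> powr a)) (at_right 0)"
    using M unfolding MB_def by blast
  have "eventually (\<lambda>\<epsilon>. Bd \<Omega> k (partial i (U \<epsilon>)) (C * \<epsilon> powr a)) (at_right 0)"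
    using 1 by eventually_elim (rule Bd_partial)
  then show "\<exists>a C. eventually (\<lambda>\<epsilon>. Bd \<Omega> k (partial i (U \<epsilon>)) (C * \<epsilon> powr a)) (at_right 0)" by blast
qed

lemma NB_partial: assumes M: "NB \<Omega> U" shows "NB \<Omega> (\<lambda>\<epsilon>. partial i (U \<epsilon>))"
  unfolding NB_def
proof (intro allI)
  fix k a
  obtain C where 1: "eventually (\<lambda>\<epsilon>. Bd \<Omega> (Suc k) (U \<epsilon>) (C * \<epsilon> powr a)) (at_right 0)"
    using M unfolding NB_def by blast
  have "eventually (\<lambda>\<epsilon>. Bd \<Omega> k (partial i (U \<epsilon>)) (C * \<epsilon> powr a)) (at_right 0)"
    using 1 by eventually_elim (rule Bd_partial)
  then show "\<exists>C. eventually (\<lambda>\<epsilon>. Bd \<Omega> k (partial i (U \<epsilon>)) (C * \<epsilon> powr a)) (at_right 0)" by blast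
qed

lemma MB_const: "MB \<Omega> (\<lambda>\<epsilon> x. c)"
  unfolding MB_def
proof
  fix k
  have "eventually (\<lambda>\<epsilon>. Bd \<Omega> k (\<lambda>x. c) (\<bar>c\<bar> * \<epsilon> powr 0)) (at_right 0)"
    using ev_small by eventually_elim (simp add: Bd_const)
  then show "\<exists>a C. eventually (\<lambda>\<epsilon>. Bd \<Omega> k (\<lambda>x. c) (C * \<epsilon> powr a)) (at_right 0)" by blast
qed

lemma NB_zero: "NB \<Omega> (\<lambda>\<epsilon> x. 0)"
  unfolding NB_def
proof (intro allI)
  fix k a
  have "eventually (\<lambda>\<epsilon>. Bd \<Omega> k (\<lambda>x. 0) (0 * \<epsilon> powr a)) (at_right 0)"
    using Bd_const[of \<Omega> k 0] by simp
  then show "\<exists>C. eventually (\<lambda>\<epsilon>. Bd \<Omega> k (\<lambda>x. 0) (C * \<epsilon> powr a)) (at_right 0)" by blast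
qed

lemma MB_cmult: assumes SU: "SM \<Omega> U" and MU: "MB \<Omega> U" shows "MB \<Omega> (\<lambda>\<epsilon> x. c * U \<epsilon> x)"
  unfolding MB_def
proof
  fix k
  obtain a C where 1: "eventually (\<lambda>\<epsilon>. Bd \<Omega> k (U \<epsilon>) (C * \<epsilon> powr a)) (at_right 0)"
    using MU unfolding MB_def by blast
  have "eventually (\<lambda>\<epsilon>. Bd \<Omega> k (\<lambda>x. c * U \<epsilon> x) ((\<bar>c\<bar> * C) * \<epsilon> powr a)) (at_right 0)"
    using 1 SU unfolding SM_def
  proof eventually_elim
    case (elim \<epsilon>)
    then show ?case using Bd_cmult[OF op _ elim(1), of c] by (simp add: mult.assoc)
  qed
  then show "\<exists>a C. eventually (\<lambda>\<epsilon>. Bd \<Omega> k (\<lambda>x. c * U \<epsilon> x) (C * \<epsilon> powr a)) (at_right 0)" by blast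
qed

lemma NB_cmult: assumes SU: "SM \<Omega> U" and MU: "NB \<Omega> U" shows "NB \<Omega> (\<lambda>\<epsilon> x. c * U \<epsilon> x)"
  unfolding NB_def
proof (intro allI)
  fix k a
  obtain C where 1: "eventually (\<lambda>\<epsilon>. Bd \<Omega> k (U \<epsilon>) (C * \<epsilon> powr a)) (at_right 0)"
    using MU unfolding NB_def by blast
  have "eventually (\<lambda>\<epsilon>. Bd \<Omega> k (\<lambda>x. c * U \<epsilon> x) ((\<bar>c\<bar> * C) * \<epsilon> powr a)) (at_right 0)"
    using 1 SU unfolding SM_def
  proof eventually_elim
    case (elim \<epsilon>)
    then show ?case using Bd_cmult[OF op _ elim(1), of c] by (simp add: mult.assoc)
  qed
  then show "\<exists>C. eventually (\<lambda>\<epsilon>. Bd \<Omega> k (\<lambda>x. c * U \<epsilon> x) (C * \<epsilon> powr a)) (at_right 0)" by blast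
qed

lemma NB_add: assumes SU: "SM \<Omega> U" and SV: "SM \<Omega> V" and MU: "NB \<Omega> U" and MV: "NB \<Omega> V"
  shows "NB \<Omega> (\<lambda>\<epsilon> x. U \<epsilon> x + V \<epsilon> x)"
  unfolding NB_def
proof (intro allI)
  fix k a
  obtain C1 where 1: "0 \<le> C1" "eventually (\<lambda>\<epsilon>. Bd \<Omega> k (U \<epsilon>) (C1 * \<epsilon> powr a)) (at_right 0)"
    using NB_D[OF MU] by blast
  obtain C2 where 2: "0 \<le> C2" "eventually (\<lambda>\<epsilon>. Bd \<Omega> k (V \<epsilon>) (C2 * \<epsilon> powr a)) (at_right 0)"
    using NB_D[OF MV] by blast
  have "eventually (\<lambda>\<epsilon>. Bd \<Omega> k (\<lambda>x. U \<epsilon> x + V \<epsilon> x) ((C1 + C2) * \<epsilon> powr a)) (at_right 0)"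
    using 1(2) 2(2) SU SV unfolding SM_def
  proof eventually_elim
    case (elim \<epsilon>)
    then show ?case
      using Bd_add[OF op _ _ elim(1) elim(2)] by (simp add: distrib_right)
  qed
  then show "\<exists>C. eventually (\<lambda>\<epsilon>. Bd \<Omega> k (\<lambda>x. U \<epsilon> x + V \<epsilon> x) (C * \<epsilon> powr a)) (at_right 0)"
    by blast
qed

lemma MB_mult: assumes SU: "SM \<Omega> U" and SV: "SM \<Omega> V" and MU: "MB \<Omega> U" and MV: "MB \<Omega> V"
  shows "MB \<Omega> (\<lambda>\<epsilon> x. U \<epsilon> x * V \<epsilon> x)"
  unfolding MB_def
proof
  fix k
  obtain a1 C1 where 1: "eventually (\<lambda>\<epsilon>. Bd \<Omega> k (U \<epsilon>) (C1 * \<epsilon> powr a1)) (at_right 0)"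
    using MU unfolding MB_def by blast
  obtain a2 C2 where 2: "eventually (\<lambda>\<epsilon>. Bd \<Omega> k (V \<epsilon>) (C2 * \<epsilon> powr a2)) (at_right 0)"
    using MV unfolding MB_def by blast
  have "eventually (\<lambda>\<epsilon>. Bd \<Omega> k (\<lambda>x. U \<epsilon> x * V \<epsilon> x) ((2^k * C1 * C2) * \<epsilon> powr (a1 + a2))) (at_right 0)"
    using 1 2 SU SV unfolding SM_def
  proof eventually_elim
    case (elim \<epsilon>)
    have "2^k * (C1 * \<epsilon> powr a1) * (C2 * \<epsilon> powr a2) = (2^k * C1 * C2) * \<epsilon> powr (a1 + a2)"
      by (simp add: powr_add mult_ac)
    then show ?case
      using Bd_mult[OF op bd _ _ elim(1) elim(2)] elim(3,4) by metis
  qed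
  then show "\<exists>a C. eventually (\<lambda>\<epsilon>. Bd \<Omega> k (\<lambda>x. U \<epsilon> x * V \<epsilon> x) (C * \<epsilon> powr a)) (at_right 0)"
    by blast
qed

lemma NB_mult: assumes SU: "SM \<Omega> U" and SV: "SM \<Omega> V" and MU: "NB \<Omega> U" and MV: "MB \<Omega> V"
  shows "NB \<Omega> (\<lambda>\<epsilon> x. U \<epsilon> x * V \<epsilon> x)"
  unfolding NB_def
proof (intro allI)
  fix k a
  obtain a2 C2 where 2: "eventually (\<lambda>\<epsilon>. Bd \<Omega> k (V \<epsilon>) (C2 * \<epsilon> powr a2)) (at_right 0)"
    using MV unfolding MB_def by blast
  obtain C1 where 1: "eventually (\<lambda>\<epsilon>. Bd \<Omega> k (U \<epsilon>) (C1 * \<epsilon> powr (a - a2))) (at_right 0)"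
    using MU unfolding NB_def by blast
  have "eventually (\<lambda>\<epsilon>. Bd \<Omega> k (\<lambda>x. U \<epsilon> x * V \<epsilon> x) ((2^k * C1 * C2) * \<epsilon> powr a)) (at_right 0)"
    using 1 2 SU SV unfolding SM_def
  proof eventually_elim
    case (elim \<epsilon>)
    have "2^k * (C1 * \<epsilon> powr (a - a2)) * (C2 * \<epsilon> powr a2) = (2^k * C1 * C2) * \<epsilon> powr ((a - a2) + a2)"
      by (simp only: powr_add mult_ac)
    then have "2^k * (C1 * \<epsilon> powr (a - a2)) * (C2 * \<epsilon> powr a2) = (2^k * C1 * C2) * \<epsilon> powr a"
      by simp
    then show ?case
      using Bd_mult[OF op bd _ _ elim(1) elim(2)] elim(3,4) by metis
  qed
  then show "\<exists>C. eventually (\<lambda>\<epsilon>. Bd \<Omega> k (\<lambda>x. U \<epsilon> x * V \<epsilon> x) (C * \<epsilon> powr a)) (at_right 0)"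
    by blast
qed

end




context
  fixes \<Omega> :: "(real^'n::finite) set"
  assumes op: "open \<Omega>" and bd: "bounded \<Omega>"
begin

lemma MB_inverse: assumes SU: "SM \<Omega> U" and MU: "MB \<Omega> U" and L: "LB \<Omega> U"
  shows "MB \<Omega> (\<lambda>\<epsilon> x. inverse (U \<epsilon> x))"
proof -
  obtain c m where c: "c > 0" and ev: "eventually (\<lambda>\<epsilon>. \<forall>x\<in>\<Omega>. c * \<epsilon> ^ m \<le> \<bar>U \<epsilon> x\<bar>) (at_right 0)"
    using L unfolding LB_def[OF op bd] by blast
  have "\<exists>a C. 0 \<le> C \<and> eventually (\<lambda>\<epsilon>. Bd \<Omega> k (\<lambda>x. inverse (U \<epsilon> x)) (C * \<epsilon> powr a)) (at_right 0)" for k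
  proof (induction k)
    case 0
    have "eventually (\<lambda>\<epsilon>. Bd \<Omega> 0 (\<lambda>x. inverse (U \<epsilon> x)) ((1/c) * \<epsilon> powr (- real m))) (at_right 0)"
      using ev ev_small
    proof eventually_elim
      case (elim \<epsilon>)
      have pos: "0 < c * \<epsilon> ^ m" using c elim by simp
      have eq: "(1/c) * \<epsilon> powr (- real m) = inverse (c * \<epsilon> ^ m)"
        using elim by (simp add: powr_minus powr_realpow field_simps)
      show ?case unfolding Bd_0 eq
      proof
        fix x assume "x \<in> \<Omega>"
        then have "c * \<epsilon> ^ m \<le> \<bar>U \<epsilon> x\<bar>" using elim by blast
        then have "inverse \<bar>U \<epsilon> x\<bar> \<le> inverse (c * \<epsilon> ^ m)"
          using pos by (rule le_imp_inverse_le)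
        then show "\<bar>inverse (U \<epsilon> x)\<bar> \<le> inverse (c * \<epsilon> ^ m)" by (simp add: abs_inverse)
      qed
    qed
    then show ?case using c by (intro exI[of _ "- real m"] exI[of _ "1/c"]) simp
  next
    case (Suc k)
    then obtain a C where C: "0 \<le> C" and IH: "eventually (\<lambda>\<epsilon>. Bd \<Omega> k (\<lambda>x. inverse (U \<epsilon> x)) (C * \<epsilon> powr a)) (at_right 0)"
      by blast
    obtain af Cf where Cf: "0 \<le> Cf" and F: "eventually (\<lambda>\<epsilon>. Bd \<Omega> (Suc k) (U \<epsilon>) (Cf * \<epsilon> powr af)) (at_right 0)"
      using MB_D[OF MU] by blast
    define D where "D = 2^k * Cf * (2^k * C * C)"
    have D: "0 \<le> D" unfolding D_def using C Cf by simp
    have "eventually (\<lambda>\<epsilon>. Bd \<Omega> (Suc k) (\<lambda>x. inverse (U \<epsilon> x)) ((C + D) * \<epsilon> powr (min a (af + a + a)))) (at_right 0)"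
      using IH F ev ev_small SU unfolding SM_def
    proof eventually_elim
      case (elim \<epsilon>)
      have pos: "0 < c * \<epsilon> ^ m" using c elim by simp
      have B: "Bd \<Omega> (Suc k) (\<lambda>x. inverse (U \<epsilon> x))
          (C * \<epsilon> powr a + 2^k * (Cf * \<epsilon> powr af) * (2^k * (C * \<epsilon> powr a) * (C * \<epsilon> powr a)))"
        by (rule Bd_inverse[OF op bd pos elim(3) _ elim(2) elim(1)]) (use elim(5) in blast)
      have eq: "2^k * (Cf * \<epsilon> powr af) * (2^k * (C * \<epsilon> powr a) * (C * \<epsilon> powr a)) = D * \<epsilon> powr (af + a + a)"
        unfolding D_def powr_add by (simp only: mult_ac)
      have le: "C * \<epsilon> powr a + D * \<epsilon> powr (af + a + a) \<le> (C + D) * \<epsilon> powr (min a (af + a + a))"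
        using pw_sum[of \<epsilon> C D a "af + a + a"] elim(4) C D by simp
      show ?case using Bd_mono[OF B[unfolded eq] order_refl le] .
    qed
    then show ?case using C D by (intro exI[of _ "min a (af + a + a)"] exI[of _ "C + D"]) simp
  qed
  then show ?thesis unfolding MB_def by blast
qed


lemma ev_all: "eventually (\<lambda>\<epsilon>. \<forall>x\<in>\<Omega>. U \<epsilon> x = V \<epsilon> x) (at_right 0)" if "\<And>\<epsilon> x. U \<epsilon> x = V \<epsilon> x"
  using that by simp

lemma mod_add: "moderate \<Omega> U \<Longrightarrow> moderate \<Omega> V \<Longrightarrow> moderate \<Omega> (\<lambda>\<epsilon> x. U \<epsilon> x + V \<epsilon> x)"
  unfolding moderate_iff using SM_add[OF op bd] MB_add[OF op bd] by blast

lemma mod_cmult: "moderate \<Omega> U \<Longrightarrow> moderate \<Omega> (\<lambda>\<epsilon> x. c * U \<epsilon> x)"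
  unfolding moderate_iff using SM_cmult[OF op bd] MB_cmult[OF op bd] by blast

lemma mod_mult: "moderate \<Omega> U \<Longrightarrow> moderate \<Omega> V \<Longrightarrow> moderate \<Omega> (\<lambda>\<epsilon> x. U \<epsilon> x * V \<epsilon> x)"
  unfolding moderate_iff using SM_mult[OF op bd] MB_mult[OF op bd] by blast

lemma mod_partial: "moderate \<Omega> U \<Longrightarrow> moderate \<Omega> (\<lambda>\<epsilon>. partial i (U \<epsilon>))"
  unfolding moderate_iff using SM_partial[OF op bd] MB_partial[OF op bd] by blast

lemma mod_const: "moderate \<Omega> (\<lambda>\<epsilon> x. c)"
  unfolding moderate_iff using SM_const[OF op bd] MB_const[OF op bd] by blast

lemma mod_cong: "eventually (\<lambda>\<epsilon>. \<forall>x\<in>\<Omega>. U \<epsilon> x = V \<epsilon> x) (at_right 0) \<Longrightarrow> moderate \<Omega> U \<Longrightarrow> moderate \<Omega> V"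
  unfolding moderate_iff using SM_cong[OF op bd] MB_cong[OF op bd] by blast

lemma mod_inverse: "moderate \<Omega> U \<Longrightarrow> LB \<Omega> U \<Longrightarrow> moderate \<Omega> (\<lambda>\<epsilon> x. inverse (U \<epsilon> x))"
  unfolding moderate_iff using SM_inverse[OF op bd] MB_inverse by blast

lemma neg_mod: "negligible \<Omega> U \<Longrightarrow> moderate \<Omega> U"
  unfolding negligible_iff moderate_iff by blast

lemma neg_add: "negligible \<Omega> U \<Longrightarrow> negligible \<Omega> V \<Longrightarrow> negligible \<Omega> (\<lambda>\<epsilon> x. U \<epsilon> x + V \<epsilon> x)"
  unfolding negligible_iff using SM_add[OF op bd] MB_add[OF op bd] NB_add[OF op bd] by blast

lemma neg_cmult: "negligible \<Omega> U \<Longrightarrow> negligible \<Omega> (\<lambda>\<epsilon> x. c * U \<epsilon> x)"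
  unfolding negligible_iff using SM_cmult[OF op bd] MB_cmult[OF op bd] NB_cmult[OF op bd] by blast

lemma neg_mult: "negligible \<Omega> U \<Longrightarrow> moderate \<Omega> V \<Longrightarrow> negligible \<Omega> (\<lambda>\<epsilon> x. U \<epsilon> x * V \<epsilon> x)"
  unfolding negligible_iff moderate_iff using SM_mult[OF op bd] MB_mult[OF op bd] NB_mult[OF op bd] by blast

lemma neg_mult': "moderate \<Omega> U \<Longrightarrow> negligible \<Omega> V \<Longrightarrow> negligible \<Omega> (\<lambda>\<epsilon> x. U \<epsilon> x * V \<epsilon> x)"
proof -
  assume M: "moderate \<Omega> U" and N: "negligible \<Omega> V"
  have "negligible \<Omega> (\<lambda>\<epsilon> x. V \<epsilon> x * U \<epsilon> x)" by (rule neg_mult[OF N M])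
  moreover have "(\<lambda>\<epsilon> x. V \<epsilon> x * U \<epsilon> x) = (\<lambda>\<epsilon> x. U \<epsilon> x * V \<epsilon> x)" by (simp add: mult.commute)
  ultimately show ?thesis by simp
qed

lemma neg_partial: "negligible \<Omega> U \<Longrightarrow> negligible \<Omega> (\<lambda>\<epsilon>. partial i (U \<epsilon>))"
  unfolding negligible_iff using SM_partial[OF op bd] MB_partial[OF op bd] NB_partial[OF op bd] by blast

lemma neg_cong: "eventually (\<lambda>\<epsilon>. \<forall>x\<in>\<Omega>. U \<epsilon> x = V \<epsilon> x) (at_right 0) \<Longrightarrow> negligible \<Omega> U \<Longrightarrow> negligible \<Omega> V"
  unfolding negligible_iff using SM_cong[OF op bd] MB_cong[OF op bd] NB_cong[OF op bd] by blast

lemma neg_zero: "negligible \<Omega> (\<lambda>\<epsilon> x. 0)"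
  unfolding negligible_iff using SM_const[OF op bd] MB_const[OF op bd] NB_zero[OF op bd] by blast

lemma mod_sum: "finite S \<Longrightarrow> (\<forall>s\<in>S. moderate \<Omega> (F s)) \<Longrightarrow> moderate \<Omega> (\<lambda>\<epsilon> x. \<Sum>s\<in>S. F s \<epsilon> x)"
proof (induction S rule: finite_induct)
  case empty then show ?case using mod_const[of 0] by simp
next
  case (insert s S)
  then have "moderate \<Omega> (\<lambda>\<epsilon> x. F s \<epsilon> x + (\<Sum>s\<in>S. F s \<epsilon> x))" by (intro mod_add) auto
  then show ?case using insert by simp
qed

lemma mod_power: "moderate \<Omega> U \<Longrightarrow> moderate \<Omega> (\<lambda>\<epsilon> x. U \<epsilon> x ^ k)"
proof (induction k)
  case 0 then show ?case using mod_const[of 1] by simp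
next
  case (Suc k)
  then have "moderate \<Omega> (\<lambda>\<epsilon> x. U \<epsilon> x * U \<epsilon> x ^ k)" by (intro mod_mult) auto
  then show ?case by simp
qed

lemma mod_powi: "moderate \<Omega> U \<Longrightarrow> LB \<Omega> U \<Longrightarrow> moderate \<Omega> (\<lambda>\<epsilon> x. power_int (U \<epsilon> x) n)"
proof (cases "0 \<le> n")
  case True
  assume "moderate \<Omega> U"
  then have "moderate \<Omega> (\<lambda>\<epsilon> x. U \<epsilon> x ^ nat n)" by (rule mod_power)
  then show ?thesis using True by (simp add: power_int_def)
next
  case False
  assume "moderate \<Omega> U" "LB \<Omega> U"
  then have "moderate \<Omega> (\<lambda>\<epsilon> x. inverse (U \<epsilon> x) ^ nat (- n))" by (intro mod_power mod_inverse)
  then show ?thesis using False by (simp add: power_int_def)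
qed

end




lemma partial_diff:
  fixes f g :: "real^'n::finite \<Rightarrow> real"
  assumes "f differentiable (at x)" "g differentiable (at x)"
  shows "partial i (\<lambda>y. f y - g y) x = partial i f x - partial i g x"
  unfolding partial_def[of i "\<lambda>y. f y - g y"]
  by (rule DERIV_imp_deriv, rule DERIV_diff[OF line_deriv[OF assms(1)] line_deriv[OF assms(2)]])

context
  fixes \<Omega> :: "(real^'n::finite) set"
  assumes op: "open \<Omega>" and bd: "bounded \<Omega>"
begin

lemma LB_I:
  assumes "\<exists>\<epsilon>0\<in>{0<..1}. \<exists>C>0. \<exists>m::nat. \<forall>\<epsilon>\<in>{0<..<\<epsilon>0}. \<forall>x\<in>\<Omega>. \<bar>v \<epsilon> x\<bar> \<ge> C * \<epsilon> ^ m"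
  shows "LB \<Omega> v"
proof -
  obtain \<epsilon>0 C m where e: "\<epsilon>0 > 0" and C: "C > 0" and h: "\<forall>\<epsilon>\<in>{0<..<\<epsilon>0}. \<forall>x\<in>\<Omega>. \<bar>v \<epsilon> x\<bar> \<ge> C * \<epsilon> ^ m"
    using assms by auto
  have "eventually (\<lambda>\<epsilon>. \<forall>x\<in>\<Omega>. C * \<epsilon> ^ m \<le> \<bar>v \<epsilon> x\<bar>) (at_right 0)"
    unfolding ev_iff[symmetric] using e h by blast
  then show ?thesis unfolding LB_def[OF op bd] using C by blast
qed

lemma geq_refl: "moderate \<Omega> U \<Longrightarrow> gequiv \<Omega> U U"
  unfolding gequiv_def using neg_zero[OF op bd] by simp

lemma geq_sym: assumes "gequiv \<Omega> U V" shows "gequiv \<Omega> V U"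
proof -
  have "negligible \<Omega> (\<lambda>\<epsilon> x. (-1) * (U \<epsilon> x - V \<epsilon> x))"
    using assms unfolding gequiv_def by (rule neg_cmult[OF op bd])
  moreover have "(\<lambda>\<epsilon> x. (-1) * (U \<epsilon> x - V \<epsilon> x)) = (\<lambda>\<epsilon> x. V \<epsilon> x - U \<epsilon> x)" by simp
  ultimately show ?thesis unfolding gequiv_def by simp
qed

lemma geq_add: assumes "gequiv \<Omega> U U'" "gequiv \<Omega> V V'"
  shows "gequiv \<Omega> (\<lambda>\<epsilon> x. U \<epsilon> x + V \<epsilon> x) (\<lambda>\<epsilon> x. U' \<epsilon> x + V' \<epsilon> x)"
proof -
  have "negligible \<Omega> (\<lambda>\<epsilon> x. (U \<epsilon> x - U' \<epsilon> x) + (V \<epsilon> x - V' \<epsilon> x))"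
    using assms unfolding gequiv_def by (rule neg_add[OF op bd])
  moreover have "(\<lambda>\<epsilon> x. (U \<epsilon> x - U' \<epsilon> x) + (V \<epsilon> x - V' \<epsilon> x)) = (\<lambda>\<epsilon> x. (U \<epsilon> x + V \<epsilon> x) - (U' \<epsilon> x + V' \<epsilon> x))"
    by (simp add: algebra_simps)
  ultimately show ?thesis unfolding gequiv_def by simp
qed

lemma geq_uminus: assumes "gequiv \<Omega> U U'"
  shows "gequiv \<Omega> (\<lambda>\<epsilon> x. - U \<epsilon> x) (\<lambda>\<epsilon> x. - U' \<epsilon> x)"
proof -
  have "negligible \<Omega> (\<lambda>\<epsilon> x. (-1) * (U \<epsilon> x - U' \<epsilon> x))"
    using assms unfolding gequiv_def by (rule neg_cmult[OF op bd])
  moreover have "(\<lambda>\<epsilon> x. (-1) * (U \<epsilon> x - U' \<epsilon> x)) = (\<lambda>\<epsilon> x. - U \<epsilon> x - - U' \<epsilon> x)" by simp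
  ultimately show ?thesis unfolding gequiv_def by simp
qed

lemma geq_mult: assumes "moderate \<Omega> V" "moderate \<Omega> U'" "gequiv \<Omega> U U'" "gequiv \<Omega> V V'"
  shows "gequiv \<Omega> (\<lambda>\<epsilon> x. U \<epsilon> x * V \<epsilon> x) (\<lambda>\<epsilon> x. U' \<epsilon> x * V' \<epsilon> x)"
proof -
  have "negligible \<Omega> (\<lambda>\<epsilon> x. (U \<epsilon> x - U' \<epsilon> x) * V \<epsilon> x + U' \<epsilon> x * (V \<epsilon> x - V' \<epsilon> x))"
    using assms unfolding gequiv_def
    by (intro neg_add[OF op bd] neg_mult[OF op bd] neg_mult'[OF op bd])
  moreover have "(\<lambda>\<epsilon> x. (U \<epsilon> x - U' \<epsilon> x) * V \<epsilon> x + U' \<epsilon> x * (V \<epsilon> x - V' \<epsilon> x)) = (\<lambda>\<epsilon> x. U \<epsilon> x * V \<epsilon> x - U' \<epsilon> x * V' \<epsilon> x)"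
    by (simp add: algebra_simps)
  ultimately show ?thesis unfolding gequiv_def by simp
qed

lemma geq_partial: assumes "moderate \<Omega> U" "moderate \<Omega> U'" "gequiv \<Omega> U U'"
  shows "gequiv \<Omega> (\<lambda>\<epsilon>. partial i (U \<epsilon>)) (\<lambda>\<epsilon>. partial i (U' \<epsilon>))"
proof -
  have N: "negligible \<Omega> (\<lambda>\<epsilon>. partial i (\<lambda>y. U \<epsilon> y - U' \<epsilon> y))"
    using assms(3) unfolding gequiv_def by (rule neg_partial[OF op bd])
  have "eventually (\<lambda>\<epsilon>. \<forall>x\<in>\<Omega>. partial i (\<lambda>y. U \<epsilon> y - U' \<epsilon> y) x = partial i (U \<epsilon>) x - partial i (U' \<epsilon>) x) (at_right 0)"
    using assms(1,2) unfolding moderate_iff SM_def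
  proof (elim conjE)
    assume "eventually (\<lambda>\<epsilon>. \<forall>n. Fn \<Omega> n (U \<epsilon>)) (at_right 0)" "eventually (\<lambda>\<epsilon>. \<forall>n. Fn \<Omega> n (U' \<epsilon>)) (at_right 0)"
    then show ?thesis
    proof eventually_elim
      case (elim \<epsilon>)
      show ?case
      proof
        fix x assume x: "x \<in> \<Omega>"
        show "partial i (\<lambda>y. U \<epsilon> y - U' \<epsilon> y) x = partial i (U \<epsilon>) x - partial i (U' \<epsilon>) x"
          by (rule partial_diff[OF Fn_D0[OF spec[OF elim(1), of 0] x] Fn_D0[OF spec[OF elim(2), of 0] x]])
      qed
    qed
  qed
  then show ?thesis unfolding gequiv_def
    by (rule neg_cong[OF op bd, where V="\<lambda>\<epsilon> x. partial i (U \<epsilon>) x - partial i (U' \<epsilon>) x", OF _ N])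
qed

lemma geq_inverse: assumes "moderate \<Omega> U" "moderate \<Omega> U'" "LB \<Omega> U" "LB \<Omega> U'" "gequiv \<Omega> U U'"
  shows "gequiv \<Omega> (\<lambda>\<epsilon> x. inverse (U \<epsilon> x)) (\<lambda>\<epsilon> x. inverse (U' \<epsilon> x))"
proof -
  have N: "negligible \<Omega> (\<lambda>\<epsilon> x. (U' \<epsilon> x - U \<epsilon> x) * (inverse (U \<epsilon> x) * inverse (U' \<epsilon> x)))"
    using geq_sym[OF assms(5)] unfolding gequiv_def
    by (intro neg_mult[OF op bd] mod_mult[OF op bd] mod_inverse[OF op bd] assms(1-4))
  obtain c m where c: "c > 0" and ev: "eventually (\<lambda>\<epsilon>. \<forall>x\<in>\<Omega>. c * \<epsilon> ^ m \<le> \<bar>U \<epsilon> x\<bar>) (at_right 0)"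
    using assms(3) unfolding LB_def[OF op bd] by blast
  obtain c' m' where c': "c' > 0" and ev': "eventually (\<lambda>\<epsilon>. \<forall>x\<in>\<Omega>. c' * \<epsilon> ^ m' \<le> \<bar>U' \<epsilon> x\<bar>) (at_right 0)"
    using assms(4) unfolding LB_def[OF op bd] by blast
  have "eventually (\<lambda>\<epsilon>. \<forall>x\<in>\<Omega>. (U' \<epsilon> x - U \<epsilon> x) * (inverse (U \<epsilon> x) * inverse (U' \<epsilon> x)) = inverse (U \<epsilon> x) - inverse (U' \<epsilon> x)) (at_right 0)"
    using ev ev' ev_small
  proof eventually_elim
    case (elim \<epsilon>)
    show ?case
    proof
      fix x assume x: "x \<in> \<Omega>"
      have "0 < c * \<epsilon> ^ m" "0 < c' * \<epsilon> ^ m'" using c c' elim by auto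
      then have "U \<epsilon> x \<noteq> 0" "U' \<epsilon> x \<noteq> 0" using elim x by fastforce+
      then show "(U' \<epsilon> x - U \<epsilon> x) * (inverse (U \<epsilon> x) * inverse (U' \<epsilon> x)) = inverse (U \<epsilon> x) - inverse (U' \<epsilon> x)"
        by (simp add: field_simps)
    qed
  qed
  then show ?thesis unfolding gequiv_def
    by (rule neg_cong[OF op bd, where V="\<lambda>\<epsilon> x. inverse (U \<epsilon> x) - inverse (U' \<epsilon> x)", OF _ N])
qed

lemma geq_power: assumes "moderate \<Omega> U" "moderate \<Omega> U'" "gequiv \<Omega> U U'"
  shows "gequiv \<Omega> (\<lambda>\<epsilon> x. U \<epsilon> x ^ k) (\<lambda>\<epsilon> x. U' \<epsilon> x ^ k)"
proof (induction k)
  case 0 then show ?case using geq_refl[OF mod_const[OF op bd, of 1]] by simp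
next
  case (Suc k)
  have "gequiv \<Omega> (\<lambda>\<epsilon> x. U \<epsilon> x * U \<epsilon> x ^ k) (\<lambda>\<epsilon> x. U' \<epsilon> x * U' \<epsilon> x ^ k)"
    by (rule geq_mult[OF mod_power[OF op bd assms(1)] assms(2) assms(3) Suc])
  then show ?case by simp
qed

lemma geq_powi: assumes "moderate \<Omega> U" "moderate \<Omega> U'" "LB \<Omega> U" "LB \<Omega> U'" "gequiv \<Omega> U U'"
  shows "gequiv \<Omega> (\<lambda>\<epsilon> x. power_int (U \<epsilon> x) n) (\<lambda>\<epsilon> x. power_int (U' \<epsilon> x) n)"
proof (cases "0 \<le> n")
  case True
  have "gequiv \<Omega> (\<lambda>\<epsilon> x. U \<epsilon> x ^ nat n) (\<lambda>\<epsilon> x. U' \<epsilon> x ^ nat n)"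
    by (rule geq_power[OF assms(1,2,5)])
  then show ?thesis using True by (simp add: power_int_def)
next
  case False
  have "gequiv \<Omega> (\<lambda>\<epsilon> x. inverse (U \<epsilon> x) ^ nat (- n)) (\<lambda>\<epsilon> x. inverse (U' \<epsilon> x) ^ nat (- n))"
    by (rule geq_power[OF mod_inverse[OF op bd assms(1,3)] mod_inverse[OF op bd assms(2,4)] geq_inverse[OF assms]])
  then show ?thesis using False by (simp add: power_int_def)
qed

lemma geq_sum: "finite S \<Longrightarrow> (\<forall>s\<in>S. gequiv \<Omega> (F s) (G s)) \<Longrightarrow>
    gequiv \<Omega> (\<lambda>\<epsilon> x. \<Sum>s\<in>S. F s \<epsilon> x) (\<lambda>\<epsilon> x. \<Sum>s\<in>S. G s \<epsilon> x)"
proof (induction S rule: finite_induct)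
  case empty then show ?case using geq_refl[OF mod_const[OF op bd, of 0]] by simp
next
  case (insert s S)
  then have "gequiv \<Omega> (\<lambda>\<epsilon> x. F s \<epsilon> x + (\<Sum>s\<in>S. F s \<epsilon> x)) (\<lambda>\<epsilon> x. G s \<epsilon> x + (\<Sum>s\<in>S. G s \<epsilon> x))"
    by (intro geq_add) auto
  then show ?case using insert by simp
qed

end




theorem proposition3p10:
  fixes \<Omega> :: "(real^'n::finite) set"
    and K :: nat and ns :: "nat \<Rightarrow> int"
    and a :: "'n \<Rightarrow> 'n \<Rightarrow> real \<Rightarrow> real^'n \<Rightarrow> real"
    and b :: "nat \<Rightarrow> real \<Rightarrow> real^'n \<Rightarrow> real"
    and u :: "real \<Rightarrow> real^'n \<Rightarrow> real"
  assumes "open \<Omega>" and "bounded \<Omega>"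
    and "admissible_coeffs \<Omega> K a b"
    and "moderate \<Omega> u"
    and "\<forall>v. moderate \<Omega> v \<and> gequiv \<Omega> v u \<longrightarrow>
           (\<exists>\<epsilon>0\<in>{0<..1}. \<exists>C>0. \<exists>m::nat. \<forall>\<epsilon>\<in>{0<..<\<epsilon>0}. \<forall>x\<in>\<Omega>. \<bar>v \<epsilon> x\<bar> \<ge> C * \<epsilon> ^ m)"
  shows "moderate \<Omega> (\<lambda>\<epsilon>. semilin_op K ns a b \<epsilon> (u \<epsilon>)) \<and>
         (\<forall>a' b' v. admissible_coeffs \<Omega> K a' b' \<and> op_equiv \<Omega> K a b a' b' \<and>
            moderate \<Omega> v \<and> gequiv \<Omega> v u \<longrightarrow>
            gequiv \<Omega> (\<lambda>\<epsilon>. semilin_op K ns a' b' \<epsilon> (v \<epsilon>))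
                     (\<lambda>\<epsilon>. semilin_op K ns a b \<epsilon> (u \<epsilon>)))"
proof -
  note op = assms(1) and bd = assms(2)
  have E: "(\<lambda>\<epsilon>. semilin_op K ns a b \<epsilon> (w \<epsilon>)) =
     (\<lambda>\<epsilon> x. - (\<Sum>i\<in>UNIV. \<Sum>j\<in>UNIV. partial i (\<lambda>y. a i j \<epsilon> y * partial j (w \<epsilon>) y) x)
            + (\<Sum>l\<in>{1..K}. b l \<epsilon> x * power_int (w \<epsilon> x) (ns l)))"
    for a :: "'n \<Rightarrow> 'n \<Rightarrow> real \<Rightarrow> real^'n \<Rightarrow> real" and b :: "nat \<Rightarrow> real \<Rightarrow> real^'n \<Rightarrow> real" and w
    by (intro ext) (simp add: semilin_op_def)
  have LBu: "LB \<Omega> u"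
    using LB_I[OF op bd] assms(5) assms(4) geq_refl[OF op bd assms(4)] by blast
  have MOD: "moderate \<Omega> (\<lambda>\<epsilon>. semilin_op K ns a b \<epsilon> (w \<epsilon>))"
    if adm: "admissible_coeffs \<Omega> K a b" and w: "moderate \<Omega> w" and lw: "LB \<Omega> w"
    for a :: "'n \<Rightarrow> 'n \<Rightarrow> real \<Rightarrow> real^'n \<Rightarrow> real" and b :: "nat \<Rightarrow> real \<Rightarrow> real^'n \<Rightarrow> real" and w
  proof -
    have ma: "moderate \<Omega> (a i j)" for i j using adm unfolding admissible_coeffs_def by blast
    have mb: "moderate \<Omega> (b l)" if "l \<in> {1..K}" for l using adm that unfolding admissible_coeffs_def by blast
    have T1: "moderate \<Omega> (\<lambda>\<epsilon> x. \<Sum>i\<in>UNIV. \<Sum>j\<in>UNIV. partial i (\<lambda>y. a i j \<epsilon> y * partial j (w \<epsilon>) y) x)"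
      by (intro mod_sum[OF op bd] ballI mod_partial[OF op bd] mod_mult[OF op bd] ma w) auto
    have T2: "moderate \<Omega> (\<lambda>\<epsilon> x. \<Sum>l\<in>{1..K}. b l \<epsilon> x * power_int (w \<epsilon> x) (ns l))"
      by (intro mod_sum[OF op bd] ballI finite_atLeastAtMost mod_mult[OF op bd] mb mod_powi[OF op bd] w lw)
    have "moderate \<Omega> (\<lambda>\<epsilon> x. (-1) * (\<Sum>i\<in>UNIV. \<Sum>j\<in>UNIV. partial i (\<lambda>y. a i j \<epsilon> y * partial j (w \<epsilon>) y) x)
            + (\<Sum>l\<in>{1..K}. b l \<epsilon> x * power_int (w \<epsilon> x) (ns l)))"
      by (rule mod_add[OF op bd mod_cmult[OF op bd T1] T2])
    then show ?thesis unfolding E by simp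
  qed
  show ?thesis
  proof (intro conjI allI impI)
    show "moderate \<Omega> (\<lambda>\<epsilon>. semilin_op K ns a b \<epsilon> (u \<epsilon>))"
      by (rule MOD[OF assms(3,4) LBu])
  next
    fix a' b' v
    assume H: "admissible_coeffs \<Omega> K a' b' \<and> op_equiv \<Omega> K a b a' b' \<and> moderate \<Omega> v \<and> gequiv \<Omega> v u"
    then have adm': "admissible_coeffs \<Omega> K a' b'" and oe: "op_equiv \<Omega> K a b a' b'"
      and mv: "moderate \<Omega> v" and vu: "gequiv \<Omega> v u" by auto
    have LBv: "LB \<Omega> v" using LB_I[OF op bd] assms(5) mv vu by blast
    have mu: "moderate \<Omega> u" by (rule assms(4))
    have ma: "moderate \<Omega> (a i j)" for i j using assms(3) unfolding admissible_coeffs_def by blast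
    have mb: "moderate \<Omega> (b l)" if "l \<in> {1..K}" for l using assms(3) that unfolding admissible_coeffs_def by blast
    have ma': "moderate \<Omega> (a' i j)" for i j using adm' unfolding admissible_coeffs_def by blast
    have mb': "moderate \<Omega> (b' l)" if "l \<in> {1..K}" for l using adm' that unfolding admissible_coeffs_def by blast
    have ea: "gequiv \<Omega> (a' i j) (a i j)" for i j
      using oe geq_sym[OF op bd] unfolding op_equiv_def by blast
    have eb: "gequiv \<Omega> (b' l) (b l)" if "l \<in> {1..K}" for l
      using oe that geq_sym[OF op bd] unfolding op_equiv_def by blast
    have epv: "gequiv \<Omega> (\<lambda>\<epsilon>. partial j (v \<epsilon>)) (\<lambda>\<epsilon>. partial j (u \<epsilon>))" for j
      by (rule geq_partial[OF op bd mv mu vu])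
    have mpv: "moderate \<Omega> (\<lambda>\<epsilon>. partial j (v \<epsilon>))" for j by (rule mod_partial[OF op bd mv])
    have mpu: "moderate \<Omega> (\<lambda>\<epsilon>. partial j (u \<epsilon>))" for j by (rule mod_partial[OF op bd mu])
    have eprod: "gequiv \<Omega> (\<lambda>\<epsilon> y. a' i j \<epsilon> y * partial j (v \<epsilon>) y) (\<lambda>\<epsilon> y. a i j \<epsilon> y * partial j (u \<epsilon>) y)" for i j
      by (rule geq_mult[OF op bd mpv ma ea epv])
    have mprod: "moderate \<Omega> (\<lambda>\<epsilon> y. a' i j \<epsilon> y * partial j (v \<epsilon>) y)"
      "moderate \<Omega> (\<lambda>\<epsilon> y. a i j \<epsilon> y * partial j (u \<epsilon>) y)" for i j
      by (rule mod_mult[OF op bd ma' mpv], rule mod_mult[OF op bd ma mpu])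
    have T1: "gequiv \<Omega> (\<lambda>\<epsilon> x. \<Sum>i\<in>UNIV. \<Sum>j\<in>UNIV. partial i (\<lambda>y. a' i j \<epsilon> y * partial j (v \<epsilon>) y) x)
                       (\<lambda>\<epsilon> x. \<Sum>i\<in>UNIV. \<Sum>j\<in>UNIV. partial i (\<lambda>y. a i j \<epsilon> y * partial j (u \<epsilon>) y) x)"
      by (intro geq_sum[OF op bd] ballI geq_partial[OF op bd mprod eprod]) auto
    have epw: "gequiv \<Omega> (\<lambda>\<epsilon> x. power_int (v \<epsilon> x) n) (\<lambda>\<epsilon> x. power_int (u \<epsilon> x) n)" for n
      by (rule geq_powi[OF op bd mv mu LBv LBu vu])
    have mpw: "moderate \<Omega> (\<lambda>\<epsilon> x. power_int (v \<epsilon> x) n)" for n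
      by (rule mod_powi[OF op bd mv LBv])
    have T2: "gequiv \<Omega> (\<lambda>\<epsilon> x. \<Sum>l\<in>{1..K}. b' l \<epsilon> x * power_int (v \<epsilon> x) (ns l))
                       (\<lambda>\<epsilon> x. \<Sum>l\<in>{1..K}. b l \<epsilon> x * power_int (u \<epsilon> x) (ns l))"
      by (intro geq_sum[OF op bd] ballI finite_atLeastAtMost geq_mult[OF op bd mpw mb _ epw] eb)
    have "gequiv \<Omega> (\<lambda>\<epsilon> x. - (\<Sum>i\<in>UNIV. \<Sum>j\<in>UNIV. partial i (\<lambda>y. a' i j \<epsilon> y * partial j (v \<epsilon>) y) x)
            + (\<Sum>l\<in>{1..K}. b' l \<epsilon> x * power_int (v \<epsilon> x) (ns l)))
          (\<lambda>\<epsilon> x. - (\<Sum>i\<in>UNIV. \<Sum>j\<in>UNIV. partial i (\<lambda>y. a i j \<epsilon> y * partial j (u \<epsilon>) y) x)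
            + (\<Sum>l\<in>{1..K}. b l \<epsilon> x * power_int (u \<epsilon> x) (ns l)))"
      by (rule geq_add[OF op bd geq_uminus[OF op bd T1] T2])
    then show "gequiv \<Omega> (\<lambda>\<epsilon>. semilin_op K ns a' b' \<epsilon> (v \<epsilon>)) (\<lambda>\<epsilon>. semilin_op K ns a b \<epsilon> (u \<epsilon>))"
      unfolding E .
  qed
qed


end
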